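(* Let $\lambda>0$ and let $R,B\subset\mathbb{R}^d$ with $B=\overline{B\cap(\tfrac12+\mathbb{Z})^d}$. Let $K$ be a random subset of $(\tfrac12+\mathbb{Z})^d\cap B$, independent of $\mathcal{H}_\lambda$ (and of the edge randomness), such that $R^+_B\cap\overline{K}=\emptyset$ almost surely. Define the random set $$U:=\{z\in\Delta(R;B):\ \overline{\{z\}}\leftrightarrow\overline{K}\ \text{in}\ G(\mathcal{H}_\lambda\cap B\setminus\overline{R})\}.$$ Then for each $t\in\mathbb{N}$, $$\mathbb{P}[\#U\leq t]\leq e^{3^d\lambda t}\,\mathbb{P}\big[\{\overline{R}\leftrightarrow\overline{K}\ \text{in}\ G(\mathcal{H}_\lambda\cap B)\}^c\big].$$
   Context: Standing assumptions: $d\geq3$; $\|\cdot\|$ is an $\ell^p$ norm on $\mathbb{R}^d$ for some $p\in[1,\infty]$; $\phi:[0,\infty)\to[0,1]$ is nonincreasing with $\sup\{r>0:\phi(r)>0\}=1$. For locally finite $\mathcal{X}\subset\mathbb{R}^d$, $G(\mathcal{X})$ is the random graph on vertex set $\mathcal{X}$ in which each pair $\{x,y\}$ is joined independently with probability $\phi(\|y-x\|)$. $\mathcal{H}_\lambda$ is a homogeneous Poisson point process of intensity $\lambda$ in $\mathbb{R}^d$. $\Lambda_s(x):=x+[-s,s]^d$. For $A,A'\subset\mathbb{R}^d$, $\{A\leftrightarrow A'\text{ in }G(\mathcal{X})\}$ is the event that some $x\in\mathcal{X}\cap A$ and some $y\in\mathcal{X}\cap A'$ are joined by a path in $G(\mathcal{X})$.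 $\#A$ is the cardinality of a finite set $A$. For $\eta\subset\mathbb{R}^d$, $\overline{\eta}:=\bigcup\{\Lambda_{1/2}(z): z\in(\tfrac12+\mathbb{Z})^d,\ \Lambda_{1/2}(z)\cap\eta\neq\emptyset\}$ (the union of unit cubes centred at points of $(\tfrac12+\mathbb{Z})^d$ that meet $\eta$). For such $B$ and $\eta\subset\mathbb{R}^d$, $$\Delta(\eta;B):=\{z\in(\tfrac12+\mathbb{Z})^d\cap B\setminus\overline{\eta}:\ \Lambda_{1/2}(z)\cap\overline{\eta\cap B}\neq\emptyset\},\qquad \eta^+_B:=(\eta\cap B)\cup\Delta(\eta;B).$$ *)

theory Defs
  imports "HOL-Analysis.Analysis" "HOL-Probability.Probability"
begin

text \<open>Points of R^d are vectors of type real^'n, d = CARD('n).\<close>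

definition lp_norm :: "ereal \<Rightarrow> real^'n \<Rightarrow> real" where
  "lp_norm p x = (if p = \<infinity> then Max (range (\<lambda>i. \<bar>x $ i\<bar>))
                  else (\<Sum>i\<in>UNIV. \<bar>x $ i\<bar> powr real_of_ereal p) powr (1 / real_of_ereal p))"

definition halfint :: "(real^'n) set" where
  "halfint = {z. \<forall>i. z $ i - 1/2 \<in> \<int>}"

definition Lam :: "real \<Rightarrow> real^'n \<Rightarrow> (real^'n) set" where
  "Lam s x = {y. \<forall>i. x $ i - s \<le> y $ i \<and> y $ i \<le> x $ i + s}"

definition cubify :: "(real^'n) set \<Rightarrow> (real^'n) set" where
  "cubify \<eta> = \<Union>{Lam (1/2) z | z. z \<in> halfint \<and> Lam (1/2) z \<inter> \<eta> \<noteq> {}}"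

definition Delta :: "(real^'n) set \<Rightarrow> (real^'n) set \<Rightarrow> (real^'n) set" where
  "Delta \<eta> B = {z \<in> halfint \<inter> B - cubify \<eta>. Lam (1/2) z \<inter> cubify (\<eta> \<inter> B) \<noteq> {}}"

definition plusB :: "(real^'n) set \<Rightarrow> (real^'n) set \<Rightarrow> (real^'n) set" where
  "plusB \<eta> B = (\<eta> \<inter> B) \<union> Delta \<eta> B"

text \<open>Labels of potential Poisson points: (k,i) = i-th point of the unit cube with corner k in Z^d.\<close>
type_synonym 'n lab = "(int^'n) \<times> nat"

definition unit_cube :: "int^'n \<Rightarrow> (real^'n) set" where
  "unit_cube k = cbox (\<chi> i. real_of_int (k $ i)) (\<chi> i. real_of_int (k $ i) + 1)"

definition count_law :: "real \<Rightarrow> (int^'n \<Rightarrow> nat) measure" where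
  "count_law lam = (\<Pi>\<^sub>M k\<in>UNIV. measure_pmf (poisson_pmf lam))"

definition pos_law :: "('n lab \<Rightarrow> real^'n) measure" where
  "pos_law = (\<Pi>\<^sub>M a\<in>UNIV. uniform_measure lborel (unit_cube (fst a)))"

definition edge_law :: "('n lab set \<Rightarrow> real) measure" where
  "edge_law = (\<Pi>\<^sub>M e\<in>{S. card S = 2}. uniform_measure lborel {0..1::real})"

definition rcm_law :: "real \<Rightarrow> ((int^'n \<Rightarrow> nat) \<times> ('n lab \<Rightarrow> real^'n) \<times> ('n lab set \<Rightarrow> real)) measure" where
  "rcm_law lam = count_law lam \<Otimes>\<^sub>M (pos_law \<Otimes>\<^sub>M edge_law)"

definition alive :: "(int^'n \<Rightarrow> nat) \<Rightarrow> 'n lab \<Rightarrow> bool" where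
  "alive n a \<longleftrightarrow> snd a < n (fst a)"

definition PPP :: "(int^'n \<Rightarrow> nat) \<Rightarrow> ('n lab \<Rightarrow> real^'n) \<Rightarrow> (real^'n) set" where
  "PPP n y = {y a | a. alive n a}"

definition rcm_edges :: "ereal \<Rightarrow> (real \<Rightarrow> real) \<Rightarrow> (int^'n \<Rightarrow> nat) \<times> ('n lab \<Rightarrow> real^'n) \<times> ('n lab set \<Rightarrow> real)
    \<Rightarrow> (real^'n) set \<Rightarrow> ('n lab \<times> 'n lab) set" where
  "rcm_edges p \<phi> \<omega> S = (case \<omega> of (n, y, v) \<Rightarrow>
     {(a, b). alive n a \<and> alive n b \<and> y a \<in> S \<and> y b \<in> S \<and> a \<noteq> b \<and>
              v {a, b} < \<phi> (lp_norm p (y b - y a))})"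

definition conn_in :: "ereal \<Rightarrow> (real \<Rightarrow> real) \<Rightarrow> (int^'n \<Rightarrow> nat) \<times> ('n lab \<Rightarrow> real^'n) \<times> ('n lab set \<Rightarrow> real)
    \<Rightarrow> (real^'n) set \<Rightarrow> (real^'n) set \<Rightarrow> (real^'n) set \<Rightarrow> bool" where
  "conn_in p \<phi> \<omega> S A A' = (case \<omega> of (n, y, v) \<Rightarrow>
     (\<exists>a b. alive n a \<and> alive n b \<and> y a \<in> S \<inter> A \<and> y b \<in> S \<inter> A' \<and>
            (a, b) \<in> (rcm_edges p \<phi> \<omega> S)\<^sup>*))"

end

theory Submission
  imports Defs
begin


definition cen :: "int^'n \<Rightarrow> real^'n" where
  "cen k = (\<chi> i. real_of_int (k $ i) + 1/2)"

definition obox :: "int^'n \<Rightarrow> (real^'n) set" where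
  "obox k = {x. \<forall>i. real_of_int (k$i) < x$i \<and> x$i < real_of_int (k$i) + 1}"

lemma halfint_cen: "cen k \<in> halfint"
  by (auto simp: halfint_def cen_def)

lemma halfint_ex: "z \<in> halfint \<Longrightarrow> \<exists>k. z = cen k"
proof -
  assume "z \<in> halfint"
  then have "\<forall>i. \<exists>m::int. z$i - 1/2 = of_int m" by (auto simp: halfint_def Ints_def)
  then obtain f where f: "\<And>i. z$i - 1/2 = of_int (f i)" by metis
  show ?thesis by (rule exI[of _ "\<chi> i. f i"]) (auto simp: cen_def vec_eq_iff f[symmetric])
qed

lemma halfint_range: "halfint = range cen"
  using halfint_ex halfint_cen by blast

lemma cen_inj: "cen k = cen k' \<Longrightarrow> k = k'"
  by (auto simp: cen_def vec_eq_iff)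

lemma unit_cube_Lam: "unit_cube k = Lam (1/2) (cen k)"
  by (auto simp: unit_cube_def Lam_def cen_def mem_box_cart algebra_simps)

lemma Lam_cbox: "Lam s x = cbox (x - (\<chi> i. s)) (x + (\<chi> i. s))"
  by (auto simp: Lam_def mem_box_cart)

lemma closed_Lam: "closed (Lam s x)"
  by (simp add: Lam_cbox closed_cbox)

lemma Lam_borel[measurable]: "Lam s x \<in> sets borel"
  by (simp add: closed_Lam borel_closed)

lemma cen_in_Lam: "cen k \<in> Lam (1/2) (cen k)"
  by (auto simp: Lam_def)

lemma int_abs_le_half: "(x::real) \<in> \<int> \<Longrightarrow> \<bar>x\<bar> \<le> 1/2 \<Longrightarrow> x = 0"
proof -
  assume "x \<in> \<int>" "\<bar>x\<bar> \<le> 1/2"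
  then obtain m where m: "x = of_int m" by (auto elim: Ints_cases)
  with \<open>\<bar>x\<bar> \<le> 1/2\<close> have "\<bar>real_of_int m\<bar> < 1" by simp
  then have "\<bar>m\<bar> < 1" by linarith
  then show ?thesis using m by simp
qed

lemma center_unique: "z \<in> halfint \<Longrightarrow> z' \<in> halfint \<Longrightarrow> z' \<in> Lam (1/2) z \<Longrightarrow> z' = z"
proof -
  assume a: "z \<in> halfint" "z' \<in> halfint" "z' \<in> Lam (1/2) z"
  show ?thesis
  proof (subst vec_eq_iff, rule allI)
    fix i
    have "z'$i - z$i = (z'$i - 1/2) - (z$i - 1/2)" by simp
    also have "\<dots> \<in> \<int>"
    proof -
      have "z'$i - 1/2 \<in> \<int>" "z$i - 1/2 \<in> \<int>" using a(1,2) by (auto simp: halfint_def)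
      then show ?thesis by (rule Ints_diff)
    qed
    finally have I: "z'$i - z$i \<in> \<int>" .
    have "z$i - 1/2 \<le> z'$i \<and> z'$i \<le> z$i + 1/2" using a(3) by (auto simp: Lam_def)
    then have "\<bar>z'$i - z$i\<bar> \<le> 1/2" unfolding abs_le_iff by linarith
    with I have "z'$i - z$i = 0" by (rule int_abs_le_half)
    then show "z'$i = z$i" by simp
  qed
qed

lemma obox_unique: "x \<in> obox k \<Longrightarrow> z \<in> halfint \<Longrightarrow> x \<in> Lam (1/2) z \<Longrightarrow> z = cen k"
proof -
  assume a: "x \<in> obox k" "z \<in> halfint" "x \<in> Lam (1/2) z"
  obtain m where m: "z = cen m" using halfint_ex[OF a(2)] by blast
  have "m = k"
  proof (subst vec_eq_iff, rule allI)
    fix i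
    have 1: "real_of_int (k$i) < x$i" "x$i < real_of_int (k$i) + 1" using a(1) by (auto simp: obox_def)
    have 2: "real_of_int (m$i) \<le> x$i" "x$i \<le> real_of_int (m$i) + 1" using a(3) by (auto simp: Lam_def m cen_def algebra_simps)
    from 1 2 have "real_of_int (m$i) < real_of_int (k$i) + 1" "real_of_int (k$i) < real_of_int (m$i) + 1" by linarith+
    then have "m$i < k$i + 1" "k$i < m$i + 1" by linarith+
    then show "m$i = k$i" by linarith
  qed
  then show ?thesis by (simp add: m)
qed

lemma obox_sub: "obox k \<subseteq> unit_cube k"
  by (auto simp: obox_def unit_cube_def mem_box_cart less_imp_le)

lemma cubify_eq: "cubify \<eta> = (\<Union>k\<in>{k. Lam (1/2) (cen k) \<inter> \<eta> \<noteq> {}}. Lam (1/2) (cen k))"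
  unfolding cubify_def halfint_range by blast

lemma cubify_borel[measurable]: "cubify \<eta> \<in> sets borel"
  unfolding cubify_eq by (intro sets.countable_UN'') auto

lemma cubify_halfint: "K \<subseteq> halfint \<Longrightarrow> cubify K = (\<Union>z\<in>K. Lam (1/2) z)"
  unfolding cubify_def
proof (rule equalityI; rule subsetI)
  fix x assume "K \<subseteq> halfint" "x \<in> \<Union> {Lam (1 / 2) z |z. z \<in> halfint \<and> Lam (1 / 2) z \<inter> K \<noteq> {}}"
  then obtain z where "x \<in> Lam (1/2) z" "z \<in> halfint" "Lam (1/2) z \<inter> K \<noteq> {}" by blast
  then obtain z' where "z' \<in> K" "z' \<in> Lam (1/2) z" by blast
  with \<open>K \<subseteq> halfint\<close> \<open>z \<in> halfint\<close> have "z' = z" using center_unique by blast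
  then show "x \<in> (\<Union>z\<in>K. Lam (1/2) z)" using \<open>z' \<in> K\<close> \<open>x \<in> Lam (1/2) z\<close> by blast
next
  fix x assume "K \<subseteq> halfint" "x \<in> (\<Union>z\<in>K. Lam (1/2) z)"
  then obtain z where "z \<in> K" "x \<in> Lam (1/2) z" by blast
  with \<open>K \<subseteq> halfint\<close> show "x \<in> \<Union> {Lam (1 / 2) z |z. z \<in> halfint \<and> Lam (1 / 2) z \<inter> K \<noteq> {}}"
    using cen_in_Lam halfint_ex[of z] by (auto intro!: exI[of _ "Lam (1/2) z"] exI[of _ z])
qed

lemma mem_cubify_obox: "x \<in> obox k \<Longrightarrow> x \<in> cubify \<eta> \<longleftrightarrow> Lam (1/2) (cen k) \<inter> \<eta> \<noteq> {}"
  unfolding cubify_def using obox_unique[of x k] halfint_cen obox_sub[of k] unit_cube_Lam[of k]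
  by blast

lemma B_cube: assumes B: "B = cubify (B \<inter> halfint)" and x: "x \<in> obox k" "x \<in> B"
  shows "Lam (1/2) (cen k) \<subseteq> B" "cen k \<in> B"
proof -
  have "Lam (1/2) (cen k) \<inter> (B \<inter> halfint) \<noteq> {}" using x mem_cubify_obox B by metis
  then obtain z where z: "z \<in> B" "z \<in> halfint" "z \<in> Lam (1/2) (cen k)" by blast
  then have "z = cen k" using center_unique halfint_cen by blast
  with z show "cen k \<in> B" by simp
  show "Lam (1/2) (cen k) \<subseteq> B"
  proof
    fix x assume "x \<in> Lam (1/2) (cen k)"
    then have "x \<in> cubify (B \<inter> halfint)" unfolding cubify_def
      using \<open>z = cen k\<close> z by blast
    then show "x \<in> B" using B by simp
  qed
qed


lemma lp_norm_ge_comp: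
  assumes p: "1 \<le> p" shows "\<bar>x $ i\<bar> \<le> lp_norm p x"
proof (cases "p = \<infinity>")
  case True then show ?thesis by (simp add: lp_norm_def)
next
  case False
  with p obtain r where r: "p = ereal r" "1 \<le> r" by (cases p) auto
  have "\<bar>x $ i\<bar> = (\<bar>x $ i\<bar> powr r) powr (1/r)" using r by (simp add: powr_powr)
  also have "\<dots> \<le> (\<Sum>j\<in>UNIV. \<bar>x $ j\<bar> powr r) powr (1/r)"
    using r by (intro powr_mono2 member_le_sum) auto
  finally show ?thesis using r False by (simp add: lp_norm_def)
qed

lemma lp_norm_nonneg: "1 \<le> p \<Longrightarrow> 0 \<le> lp_norm p x"
  using lp_norm_ge_comp[of p x undefined] by linarith

lemma lp_norm_measurable[measurable]: "lp_norm p \<in> borel_measurable borel"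
proof (cases "p = \<infinity>")
  case True
  have "lp_norm p = (\<lambda>x. Max ((\<lambda>i. \<bar>x $ i\<bar>) ` UNIV))" using True by (simp add: lp_norm_def fun_eq_iff)
  also have "\<dots> \<in> borel_measurable borel" by measurable
  finally show ?thesis .
next
  case False
  have "lp_norm p = (\<lambda>x. (\<Sum>i\<in>UNIV. \<bar>x $ i\<bar> powr real_of_ereal p) powr (1 / real_of_ereal p))"
    using False by (simp add: lp_norm_def fun_eq_iff)
  also have "\<dots> \<in> borel_measurable borel" by measurable
  finally show ?thesis .
qed

lemma phi_measurable:
  fixes \<phi> :: "real \<Rightarrow> real"
  assumes phi_mono: "\<forall>r s. 0 \<le> r \<longrightarrow> r \<le> s \<longrightarrow> \<phi> s \<le> \<phi> r"
  shows "(\<lambda>r. \<phi> (max r 0)) \<in> borel_measurable borel"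
proof -
  have "mono (\<lambda>r. - \<phi> (max r 0))"
    using phi_mono by (auto simp: mono_def)
  then have "(\<lambda>r. - \<phi> (max r 0)) \<in> borel_measurable borel" by (rule borel_measurable_mono)
  then have "(\<lambda>r. - (- \<phi> (max r 0))) \<in> borel_measurable borel" by measurable
  then show ?thesis by simp
qed

lemma last_exit:
  assumes "(x, e) \<in> E\<^sup>*" "\<not> P e"
  shows "(\<not> P x \<and> (x, e) \<in> (E \<inter> {(a,b). \<not> P a \<and> \<not> P b})\<^sup>*) \<or>
         (\<exists>a b. P a \<and> (a, b) \<in> E \<and> \<not> P b \<and> (b, e) \<in> (E \<inter> {(a,b). \<not> P a \<and> \<not> P b})\<^sup>*)"
  using assms(1)
proof (induction rule: converse_rtrancl_induct)
  case base then show ?case using assms(2) by simp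
next
  case (step y z)
  show ?case
  proof (cases "P y")
    case True
    with step show ?thesis by blast
  next
    case False
    from step.IH show ?thesis
    proof
      assume "\<not> P z \<and> (z, e) \<in> (E \<inter> {(a,b). \<not> P a \<and> \<not> P b})\<^sup>*"
      then have "(y, e) \<in> (E \<inter> {(a,b). \<not> P a \<and> \<not> P b})\<^sup>*"
        using step.hyps(1) False by (auto intro: converse_rtrancl_into_rtrancl)
      then show ?thesis using False by blast
    qed blast
  qed
qed


lemma edge_short:
  assumes phi_sup: "{r. r > 0 \<and> \<phi> r > 0} \<noteq> {} \<and> bdd_above {r. r > 0 \<and> \<phi> r > 0}
                  \<and> Sup {r. r > 0 \<and> \<phi> r > 0} = 1"
    and p1: "1 \<le> p" and v0: "0 \<le> (v::real)" and lt: "v < \<phi> (lp_norm p x)"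
  shows "\<bar>x $ i\<bar> \<le> 1"
proof -
  have "lp_norm p x \<le> 1"
  proof (rule ccontr)
    assume "\<not> lp_norm p x \<le> 1"
    then have "lp_norm p x \<in> {r. r > 0 \<and> \<phi> r > 0}" using v0 lt by auto
    then have "lp_norm p x \<le> Sup {r. r > 0 \<and> \<phi> r > 0}" using phi_sup by (intro cSup_upper) auto
    with phi_sup \<open>\<not> lp_norm p x \<le> 1\<close> show False by simp
  qed
  then show ?thesis using lp_norm_ge_comp[OF p1, of x i] by linarith
qed

lemma adjacent_cubes:
  assumes "ya \<in> obox k" "yb \<in> obox k'" "\<And>i. \<bar>(yb - ya) $ i\<bar> \<le> 1"
  shows "unit_cube k \<inter> Lam (1/2) (cen k') \<noteq> {}"
proof -
  have d: "\<bar>k$i - k'$i\<bar> \<le> 1" for i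
  proof -
    have "real_of_int (k$i) < ya$i" "ya$i < real_of_int (k$i) + 1"
         "real_of_int (k'$i) < yb$i" "yb$i < real_of_int (k'$i) + 1"
      using assms(1,2) by (auto simp: obox_def)
    moreover have "\<bar>yb$i - ya$i\<bar> \<le> 1" using assms(3)[of i] by simp
    ultimately have "real_of_int (k$i) < real_of_int (k'$i) + 2" "real_of_int (k'$i) < real_of_int (k$i) + 2"
      by (auto simp: abs_le_iff)
    then have "k$i < k'$i + 2" "k'$i < k$i + 2" by linarith+
    then show ?thesis by linarith
  qed
  define w :: "real^'a" where "w = (\<chi> i. real_of_int (max (k$i) (k'$i)))"
  have "w \<in> unit_cube k"
  proof -
    have "real_of_int (k$i) \<le> real_of_int (max (k$i) (k'$i)) \<and> real_of_int (max (k$i) (k'$i)) \<le> real_of_int (k$i) + 1" for i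
      using d[of i] by (auto simp: abs_le_iff)
    then show ?thesis by (auto simp: w_def unit_cube_def mem_box_cart)
  qed
  moreover have "w \<in> Lam (1/2) (cen k')"
  proof -
    have "real_of_int (k'$i) \<le> real_of_int (max (k$i) (k'$i)) \<and> real_of_int (max (k$i) (k'$i)) \<le> real_of_int (k'$i) + 1" for i
      using d[of i] by (auto simp: abs_le_iff)
    then show ?thesis by (auto simp: w_def Lam_def cen_def algebra_simps)
  qed
  ultimately show ?thesis by blast
qed

lemma Lam_sub_cubify: "Lam (1/2) (cen k) \<inter> \<eta> \<noteq> {} \<Longrightarrow> Lam (1/2) (cen k) \<subseteq> cubify \<eta>"
  unfolding cubify_def using halfint_cen by blast

lemma obox_cen: "cen k \<in> obox k"
  by (auto simp: obox_def cen_def)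

lemma rcm_edges_diff:
  "rcm_edges p \<phi> \<omega> B \<inter> {(a,b). \<not> (case \<omega> of (n,y,v) \<Rightarrow> y a \<in> Rb) \<and> \<not> (case \<omega> of (n,y,v) \<Rightarrow> y b \<in> Rb)}
   = rcm_edges p \<phi> \<omega> (B - Rb)"
  by (cases \<omega>) (auto simp: rcm_edges_def)

lemma det_core:
  fixes n :: "int^'n \<Rightarrow> nat" and y :: "'n lab \<Rightarrow> real^'n" and v :: "'n lab set \<Rightarrow> real"
  assumes phi_sup: "{r. r > 0 \<and> \<phi> r > 0} \<noteq> {} \<and> bdd_above {r. r > 0 \<and> \<phi> r > 0}
                  \<and> Sup {r. r > 0 \<and> \<phi> r > 0} = 1"
    and p1: "1 \<le> p"
    and B: "B = cubify (B \<inter> halfint)"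
    and Ksub: "K \<subseteq> halfint \<inter> B"
    and Ksep: "plusB R B \<inter> cubify K = {}"
    and gy: "\<And>a. y a \<in> obox (fst a)"
    and gv: "\<And>a b. a \<noteq> b \<Longrightarrow> 0 \<le> v {a, b}"
    and hzero: "\<And>k z. unit_cube k \<subseteq> cubify R \<Longrightarrow> z \<in> Delta R B \<Longrightarrow>
                   conn_in p \<phi> (n, y, v) (B - cubify R) (cubify {z}) (cubify K) \<Longrightarrow>
                   unit_cube k \<inter> Lam (1/2) z \<noteq> {} \<Longrightarrow> n k = 0"
  shows "\<not> conn_in p \<phi> (n, y, v) B (cubify R) (cubify K)"
proof
  let ?Rb = "cubify R"
  let ?E = "rcm_edges p \<phi> (n, y, v) B"
  assume "conn_in p \<phi> (n, y, v) B ?Rb (cubify K)"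
  then obtain a0 e where a0: "alive n a0" "y a0 \<in> B \<inter> ?Rb" and e: "alive n e" "y e \<in> B \<inter> cubify K"
    and path: "(a0, e) \<in> ?E\<^sup>*"
    unfolding conn_in_def by auto
  have ye: "y e \<notin> ?Rb"
  proof
    assume "y e \<in> ?Rb"
    let ?k = "fst e"
    have 1: "Lam (1/2) (cen ?k) \<inter> R \<noteq> {}" using \<open>y e \<in> ?Rb\<close> mem_cubify_obox gy by blast
    have "Lam (1/2) (cen ?k) \<inter> K \<noteq> {}" using e(2) mem_cubify_obox gy by blast
    then obtain z' where z': "z' \<in> K" "z' \<in> Lam (1/2) (cen ?k)" by blast
    then have "z' = cen ?k" using Ksub center_unique halfint_cen by blast
    then have 2: "Lam (1/2) (cen ?k) \<subseteq> cubify K" using z' Ksub cubify_halfint[of K] by blast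
    have 3: "Lam (1/2) (cen ?k) \<subseteq> B" using B_cube(1)[OF B gy] e(2) by blast
    from 1 obtain r where "r \<in> R" "r \<in> Lam (1/2) (cen ?k)" by blast
    with 2 3 Ksep show False by (auto simp: plusB_def)
  qed
  from last_exit[OF path, of "\<lambda>a. y a \<in> ?Rb"] ye a0
  obtain a b where ab: "y a \<in> ?Rb" "(a, b) \<in> ?E" "y b \<notin> ?Rb"
     "(b, e) \<in> (?E \<inter> {(a,b). \<not> y a \<in> ?Rb \<and> \<not> y b \<in> ?Rb})\<^sup>*"
    by blast
  have bpath: "(b, e) \<in> (rcm_edges p \<phi> (n, y, v) (B - ?Rb))\<^sup>*"
    using ab(4) rcm_edges_diff[of p \<phi> "(n,y,v)" B ?Rb] by simp
  from ab(2) have ed: "alive n a" "alive n b" "y a \<in> B" "y b \<in> B" "a \<noteq> b"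
     "v {a, b} < \<phi> (lp_norm p (y b - y a))"
    by (auto simp: rcm_edges_def)
  let ?k = "fst a" and ?k' = "fst b"
  have short: "\<bar>(y b - y a) $ i\<bar> \<le> 1" for i
    using edge_short[OF phi_sup p1 gv[OF ed(5)] ed(6)] .
  have adj: "unit_cube ?k \<inter> Lam (1/2) (cen ?k') \<noteq> {}"
    using adjacent_cubes[OF gy gy short] .
  have kR: "Lam (1/2) (cen ?k) \<inter> R \<noteq> {}" using ab(1) mem_cubify_obox gy by blast
  have kRb: "unit_cube ?k \<subseteq> ?Rb" using Lam_sub_cubify[OF kR] unit_cube_Lam by metis
  have kB: "Lam (1/2) (cen ?k) \<subseteq> B" using B_cube(1)[OF B gy ed(3)] .
  have zD: "cen ?k' \<in> Delta R B"
  proof -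
    have "cen ?k' \<in> B" using B_cube(2)[OF B gy ed(4)] .
    moreover have "cen ?k' \<notin> ?Rb"
      using ab(3) mem_cubify_obox[OF obox_cen] mem_cubify_obox[OF gy[of b]] by blast
    moreover have "Lam (1/2) (cen ?k) \<subseteq> cubify (R \<inter> B)"
      using kR kB by (intro Lam_sub_cubify) blast
    then have "Lam (1/2) (cen ?k') \<inter> cubify (R \<inter> B) \<noteq> {}"
      using adj unit_cube_Lam[of ?k] by blast
    ultimately show ?thesis unfolding Delta_def using halfint_cen by blast
  qed
  have zU: "conn_in p \<phi> (n, y, v) (B - ?Rb) (cubify {cen ?k'}) (cubify K)"
  proof -
    have "y b \<in> cubify {cen ?k'}"
      using gy[of b] obox_sub unit_cube_Lam cubify_halfint[of "{cen ?k'}"] halfint_cen by blast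
    then show ?thesis unfolding conn_in_def prod.case using ed e ye ab(3) bpath by blast
  qed
  have "n ?k = 0" using hzero[OF kRb zD zU adj] .
  with ed(1) show False by (simp add: alive_def)
qed


lemma PiM_split:
  fixes M :: "'i \<Rightarrow> 'a measure"
  assumes M: "\<And>i. i \<in> I \<Longrightarrow> prob_space (M i)" and J: "J \<subseteq> I"
  shows "distr (PiM J M \<Otimes>\<^sub>M PiM (I - J) M) (PiM I M) (merge J (I - J)) = PiM I M"
proof (rule measure_eqI_PiM_infinite[symmetric, OF refl])
  interpret PJ: prob_space "PiM J M" using M J by (intro prob_space_PiM) auto
  interpret PI: prob_space "PiM (I - J) M" using M by (intro prob_space_PiM) auto
  interpret P: prob_space "PiM I M" using M by (intro prob_space_PiM) auto
  have JI: "J \<union> (I - J) = I" using J by auto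
  have mm: "merge J (I - J) \<in> measurable (PiM J M \<Otimes>\<^sub>M PiM (I - J) M) (PiM I M)"
    using measurable_merge[of J "I - J" M] JI by simp
  show "sets (distr (PiM J M \<Otimes>\<^sub>M PiM (I - J) M) (PiM I M) (merge J (I - J))) = sets (PiM I M)"
    by simp
  show "finite_measure (PiM I M)" by unfold_locales
  fix F A assume F: "finite F" "F \<subseteq> I" and A: "\<And>i. i \<in> F \<Longrightarrow> A i \<in> sets (M i)"
  let ?X = "prod_emb I M F (Pi\<^sub>E F A)"
  let ?X1 = "prod_emb J M (F \<inter> J) (Pi\<^sub>E (F \<inter> J) A)"
  let ?X2 = "prod_emb (I - J) M (F - J) (Pi\<^sub>E (F - J) A)"
  have "emeasure (PiM I M) ?X = (\<Prod>i\<in>F. emeasure (M i) (A i))"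
    using M F A by (intro emeasure_PiM_emb) auto
  also have "\<dots> = (\<Prod>i\<in>F \<inter> J. emeasure (M i) (A i)) * (\<Prod>i\<in>F - J. emeasure (M i) (A i))"
    using F by (simp add: prod.Int_Diff[of F _ J])
  also have "(\<Prod>i\<in>F \<inter> J. emeasure (M i) (A i)) = emeasure (PiM J M) ?X1"
    using M F A J by (intro emeasure_PiM_emb[symmetric]) auto
  also have "(\<Prod>i\<in>F - J. emeasure (M i) (A i)) = emeasure (PiM (I - J) M) ?X2"
    using M F A J by (intro emeasure_PiM_emb[symmetric]) auto
  also have "emeasure (PiM J M) ?X1 * emeasure (PiM (I - J) M) ?X2 =
      emeasure (PiM J M \<Otimes>\<^sub>M PiM (I - J) M) (?X1 \<times> ?X2)"
    using F A J by (intro PI.emeasure_pair_measure_Times[symmetric] sets_PiM_I) auto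
  also have "?X1 \<times> ?X2 = merge J (I - J) -` ?X \<inter> space (PiM J M \<Otimes>\<^sub>M PiM (I - J) M)"
    using F J A[THEN sets.sets_into_space]
    apply (auto simp: prod_emb_def space_pair_measure space_PiM PiE_iff merge_def extensional_def Pi_iff
        split: if_splits)
    using F(2) by blast
  also have "emeasure (PiM J M \<Otimes>\<^sub>M PiM (I - J) M) \<dots> =
      emeasure (distr (PiM J M \<Otimes>\<^sub>M PiM (I - J) M) (PiM I M) (merge J (I - J))) ?X"
    using F A by (intro emeasure_distr[symmetric] mm sets_PiM_I) auto
  finally show "emeasure (PiM I M) ?X =
      emeasure (distr (PiM J M \<Otimes>\<^sub>M PiM (I - J) M) (PiM I M) (merge J (I - J))) ?X" .
qed


lemma poisson_zero_prod:
  fixes lam :: real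
  assumes lam: "0 < lam" and Q: "finite Q" "Q \<subseteq> J"
  shows "emeasure (PiM J (\<lambda>_. measure_pmf (poisson_pmf lam)))
           {x \<in> space (PiM J (\<lambda>_. measure_pmf (poisson_pmf lam))). \<forall>k\<in>Q. x k = 0}
         = ennreal (exp (- lam * real (card Q)))"
proof -
  let ?M = "\<lambda>_::'k. measure_pmf (poisson_pmf lam)"
  have "{x \<in> space (PiM J ?M). \<forall>k\<in>Q. x k = 0} = prod_emb J ?M Q (Pi\<^sub>E Q (\<lambda>_. {0}))"
    apply (auto simp: prod_emb_def PiE_iff extensional_def restrict_def fun_eq_iff space_PiM)
    by metis
  also have "emeasure (PiM J ?M) \<dots> = (\<Prod>i\<in>Q. emeasure (?M i) {0})"
    using Q by (intro emeasure_PiM_emb) (auto simp: prob_space_measure_pmf)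
  also have "\<dots> = (\<Prod>i\<in>Q. ennreal (exp (- lam)))"
    by (simp add: emeasure_pmf_single pmf_poisson[OF lam])
  also have "\<dots> = ennreal (exp (- lam) ^ card Q)" by (simp add: ennreal_power)
  also have "exp (- lam) ^ card Q = exp (- lam * real (card Q))"
    by (simp add: exp_of_nat_mult[symmetric] mult.commute)
  finally show ?thesis .
qed

lemma count_zero_bound:
  fixes lam :: real and N :: nat
  defines "C \<equiv> PiM UNIV (\<lambda>_::'k. measure_pmf (poisson_pmf lam))"
  assumes lam: "0 < lam"
    and Dm: "D \<in> sets C" and Am: "A \<in> sets C"
    and depA: "\<And>n n'. (\<And>k. k \<notin> J \<Longrightarrow> n k = n' k) \<Longrightarrow> n \<in> A \<longleftrightarrow> n' \<in> A"
    and depQ: "\<And>n n'. (\<And>k. k \<notin> J \<Longrightarrow> n k = n' k) \<Longrightarrow> Q n = Q n'"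
    and DA: "\<And>n. n \<in> space C \<Longrightarrow> n \<in> D \<longleftrightarrow> n \<in> A \<and> (\<forall>k\<in>Q n. n k = 0)"
    and Qf: "\<And>n. n \<in> A \<Longrightarrow> finite (Q n) \<and> Q n \<subseteq> J \<and> card (Q n) \<le> N"
  shows "ennreal (exp (- lam * real N)) * emeasure C A \<le> emeasure C D"
proof -
  let ?M = "\<lambda>_::'k. measure_pmf (poisson_pmf lam)"
  let ?PJ = "PiM J ?M" and ?PO = "PiM (UNIV - J) ?M"
  let ?m = "merge J (UNIV - J)"
  interpret PJ: prob_space ?PJ by (intro prob_space_PiM) (auto simp: prob_space_measure_pmf)
  interpret PO: prob_space ?PO by (intro prob_space_PiM) (auto simp: prob_space_measure_pmf)
  interpret PP: pair_sigma_finite ?PJ ?PO ..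
  have split: "distr (?PJ \<Otimes>\<^sub>M ?PO) C ?m = C"
    unfolding C_def by (rule PiM_split) (auto simp: prob_space_measure_pmf)
  have mm: "?m \<in> measurable (?PJ \<Otimes>\<^sub>M ?PO) C"
    using measurable_merge[of J "UNIV - J" ?M] unfolding C_def by simp
  have em: "emeasure C X = (\<integral>\<^sup>+y. emeasure ?PJ {x \<in> space ?PJ. ?m (x, y) \<in> X} \<partial>?PO)"
    if X: "X \<in> sets C" for X
  proof -
    have "emeasure C X = emeasure (distr (?PJ \<Otimes>\<^sub>M ?PO) C ?m) X" by (simp add: split)
    also have "\<dots> = emeasure (?PJ \<Otimes>\<^sub>M ?PO) (?m -` X \<inter> space (?PJ \<Otimes>\<^sub>M ?PO))"
      by (rule emeasure_distr[OF mm X])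
    also have "\<dots> = (\<integral>\<^sup>+y. emeasure ?PJ ((\<lambda>x. (x, y)) -` (?m -` X \<inter> space (?PJ \<Otimes>\<^sub>M ?PO))) \<partial>?PO)"
      by (rule PP.emeasure_pair_measure_alt2) (rule measurable_sets[OF mm X])
    also have "\<dots> = (\<integral>\<^sup>+y. emeasure ?PJ {x \<in> space ?PJ. ?m (x, y) \<in> X} \<partial>?PO)"
      by (intro nn_integral_cong arg_cong2[where f=emeasure]) (auto simp: space_pair_measure)
    finally show ?thesis .
  qed
  define x0 :: "'k \<Rightarrow> nat" where "x0 = (\<lambda>k\<in>J. 0)"
  have x0: "x0 \<in> space ?PJ" by (simp add: x0_def space_PiM)
  have spC: "?m (x, y) \<in> space C" if "x \<in> space ?PJ" "y \<in> space ?PO" for x y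
    using measurable_space[OF mm, of "(x, y)"] that by (simp add: space_pair_measure)
  have agree: "?m (x, y) k = ?m (x0, y) k" if "k \<notin> J" for x y k
    using that by (simp add: merge_def)
  have secA: "{x \<in> space ?PJ. ?m (x, y) \<in> A} = (if ?m (x0, y) \<in> A then space ?PJ else {})" for y
  proof -
    have "?m (x, y) \<in> A \<longleftrightarrow> ?m (x0, y) \<in> A" for x
      by (rule depA) (rule agree)
    then show ?thesis by (cases "?m (x0, y) \<in> A") (simp_all only: if_True if_False; blast)+
  qed
  have secD: "{x \<in> space ?PJ. ?m (x, y) \<in> D} =
     (if ?m (x0, y) \<in> A then {x \<in> space ?PJ. \<forall>k\<in>Q (?m (x0, y)). x k = 0} else {})"
    if y: "y \<in> space ?PO" for y
  proof -
    have "?m (x, y) \<in> D \<longleftrightarrow> ?m (x0, y) \<in> A \<and> (\<forall>k\<in>Q (?m (x0, y)). x k = 0)"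
      if x: "x \<in> space ?PJ" for x
    proof -
      have "?m (x, y) \<in> D \<longleftrightarrow> ?m (x, y) \<in> A \<and> (\<forall>k\<in>Q (?m (x, y)). ?m (x, y) k = 0)"
        using DA[OF spC[OF x y]] .
      also have "\<dots> \<longleftrightarrow> ?m (x0, y) \<in> A \<and> (\<forall>k\<in>Q (?m (x0, y)). x k = 0)"
      proof -
        have "?m (x, y) \<in> A \<longleftrightarrow> ?m (x0, y) \<in> A" using depA[OF agree] .
        moreover have "Q (?m (x, y)) = Q (?m (x0, y))" using depQ[OF agree] .
        moreover have "?m (x0, y) \<in> A \<Longrightarrow> Q (?m (x0, y)) \<subseteq> J" using Qf by blast
        ultimately show ?thesis by (auto simp: merge_def)
      qed
      finally show ?thesis .
    qed
    then show ?thesis by (simp add: Collect_conj_eq[symmetric] cong: conj_cong)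
  qed
  have mx0: "(\<lambda>y. ?m (x0, y)) \<in> measurable ?PO C"
    by (rule measurable_compose[OF measurable_Pair1'[OF x0] mm])
  have emA: "emeasure C A = (\<integral>\<^sup>+y. (if ?m (x0, y) \<in> A then 1 else 0) \<partial>?PO)"
    using em[OF Am] secA PJ.emeasure_space_1 by (simp add: if_distrib cong: if_cong)
  have mA: "(\<lambda>y. if ?m (x0, y) \<in> A then 1 else 0 :: ennreal) \<in> borel_measurable ?PO"
    using mx0 Am by measurable
  have "ennreal (exp (- lam * real N)) * emeasure C A =
        (\<integral>\<^sup>+y. ennreal (exp (- lam * real N)) * (if ?m (x0, y) \<in> A then 1 else 0) \<partial>?PO)"
    using emA mA by (simp add: nn_integral_cmult)
  also have "\<dots> \<le> (\<integral>\<^sup>+y. emeasure ?PJ {x \<in> space ?PJ. ?m (x, y) \<in> D} \<partial>?PO)"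
  proof (rule nn_integral_mono)
    fix y assume y: "y \<in> space ?PO"
    show "ennreal (exp (- lam * real N)) * (if ?m (x0, y) \<in> A then 1 else 0)
          \<le> emeasure ?PJ {x \<in> space ?PJ. ?m (x, y) \<in> D}"
    proof (cases "?m (x0, y) \<in> A")
      case True
      have q: "finite (Q (?m (x0, y)))" "Q (?m (x0, y)) \<subseteq> J" "card (Q (?m (x0, y))) \<le> N"
        using Qf[OF True] by auto
      have "ennreal (exp (- lam * real N)) * (if ?m (x0, y) \<in> A then 1 else 0)
            = ennreal (exp (- lam * real N))"
        using True by simp
      also have "\<dots> \<le> ennreal (exp (- lam * real (card (Q (?m (x0, y))))))"
        using q(3) lam by (intro ennreal_leI) (simp add: mult_left_mono)
      also have "\<dots> = emeasure ?PJ {x \<in> space ?PJ. ?m (x, y) \<in> D}"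
        using secD[OF y] True poisson_zero_prod[OF lam q(1,2)] by simp
      finally show ?thesis .
    next
      case False
      then show ?thesis by simp
    qed
  qed
  also have "\<dots> = emeasure C D" using em[OF Dm] by simp
  finally show ?thesis .
qed


context
  fixes N :: "'b measure" and nf :: "'b \<Rightarrow> int^'n \<Rightarrow> nat" and yf :: "'b \<Rightarrow> 'n lab \<Rightarrow> real^'n"
    and vf :: "'b \<Rightarrow> 'n lab set \<Rightarrow> real" and lam :: real
  assumes nf: "nf \<in> measurable N (count_law lam)"
    and yf: "yf \<in> measurable N pos_law"
    and vf: "vf \<in> measurable N edge_law"
begin

lemma m_count: "(\<lambda>\<omega>. nf \<omega> k) \<in> measurable N (count_space UNIV)"
proof -
  have "(\<lambda>\<omega>. nf \<omega> k) \<in> measurable N (measure_pmf (poisson_pmf lam))"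
    using measurable_compose[OF nf[unfolded count_law_def] measurable_component_singleton[of k UNIV]]
    by simp
  then show ?thesis by simp
qed

lemma m_alive: "Measurable.pred N (\<lambda>\<omega>. alive (nf \<omega>) a)"
  unfolding alive_def using m_count[of "fst a"] by measurable

lemma m_pos[measurable]: "(\<lambda>\<omega>. yf \<omega> a) \<in> borel_measurable N"
proof -
  have 1: "(\<lambda>\<omega>. yf \<omega> a) \<in> measurable N (uniform_measure lborel (unit_cube (fst a)))"
    using measurable_compose[OF yf[unfolded pos_law_def] measurable_component_singleton[of a UNIV]]
    by simp
  have "sets (uniform_measure lborel (unit_cube (fst a))) = sets borel" by simp
  from measurable_cong_sets[OF refl this, of N] 1 show ?thesis by simp
qed

lemma m_edge_var[measurable]: "a \<noteq> b \<Longrightarrow> (\<lambda>\<omega>. vf \<omega> {a, b}) \<in> borel_measurable N"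
proof -
  assume "a \<noteq> b"
  then have "{a, b} \<in> {S. card S = 2}" by simp
  then have 1: "(\<lambda>\<omega>. vf \<omega> {a, b}) \<in> measurable N (uniform_measure lborel {0..1::real})"
    using measurable_compose[OF vf[unfolded edge_law_def] measurable_component_singleton[of "{a,b}" "{S. card S = 2}"]]
    by simp
  have "sets (uniform_measure lborel {0..1::real}) = sets borel" by simp
  from measurable_cong_sets[OF refl this, of N] 1 show ?thesis by simp
qed

lemma m_edge:
  assumes p1: "1 \<le> p" and phi_mono: "\<forall>r s. 0 \<le> r \<longrightarrow> r \<le> s \<longrightarrow> \<phi> s \<le> \<phi> r"
    and S: "S \<in> sets borel"
  shows "Measurable.pred N (\<lambda>\<omega>. (a, b) \<in> rcm_edges p \<phi> (nf \<omega>, yf \<omega>, vf \<omega>) S)"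
proof (cases "a = b")
  case True then show ?thesis by (simp add: rcm_edges_def)
next
  case False
  have eq: "\<phi> (lp_norm p x) = (\<lambda>r. \<phi> (max r 0)) (lp_norm p x)" for x :: "real^'n"
    using lp_norm_nonneg[OF p1, of x] by simp
  have ps: "(\<lambda>r. \<phi> (max r 0)) \<in> borel_measurable borel" by (rule phi_measurable[OF phi_mono])
  have "Measurable.pred N (\<lambda>\<omega>. vf \<omega> {a, b} < (\<lambda>r. \<phi> (max r 0)) (lp_norm p (yf \<omega> b - yf \<omega> a)))"
    using False ps by measurable
  then have "Measurable.pred N (\<lambda>\<omega>. alive (nf \<omega>) a \<and> alive (nf \<omega>) b \<and> yf \<omega> a \<in> S \<and> yf \<omega> b \<in> S \<and>
     vf \<omega> {a, b} < (\<lambda>r. \<phi> (max r 0)) (lp_norm p (yf \<omega> b - yf \<omega> a)))"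
    using m_alive[of a] m_alive[of b] S by measurable
  then show ?thesis using False by (simp add: rcm_edges_def eq[symmetric])
qed

lemma m_relpow:
  fixes E :: "'b \<Rightarrow> ('n lab \<times> 'n lab) set"
  assumes "\<And>a b. Measurable.pred N (\<lambda>\<omega>. (a, b) \<in> E \<omega>)"
  shows "Measurable.pred N (\<lambda>\<omega>. (a, b) \<in> (E \<omega>) ^^ m)"
proof (induction m arbitrary: b)
  case 0
  have "(\<lambda>\<omega>. (a, b) \<in> E \<omega> ^^ 0) = (\<lambda>\<omega>. a = b)" by auto
  then show ?case by (cases "a = b") auto
next
  case (Suc m)
  have "Measurable.pred N (\<lambda>\<omega>. \<exists>c. (a, c) \<in> (E \<omega>) ^^ m \<and> (c, b) \<in> E \<omega>)"
    using Suc assms by measurable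
  moreover have "(\<lambda>\<omega>. (a, b) \<in> E \<omega> ^^ Suc m) = (\<lambda>\<omega>. \<exists>c. (a, c) \<in> E \<omega> ^^ m \<and> (c, b) \<in> E \<omega>)"
    by (rule ext) (simp only: relpow.simps relcomp.simps; blast)
  ultimately show ?case by simp
qed

lemma m_rtrancl:
  fixes E :: "'b \<Rightarrow> ('n lab \<times> 'n lab) set"
  assumes "\<And>a b. Measurable.pred N (\<lambda>\<omega>. (a, b) \<in> E \<omega>)"
  shows "Measurable.pred N (\<lambda>\<omega>. (a, b) \<in> (E \<omega>)\<^sup>*)"
proof -
  have "Measurable.pred N (\<lambda>\<omega>. \<exists>m. (a, b) \<in> (E \<omega>) ^^ m)"
    using m_relpow[OF assms] by measurable
  then show ?thesis by (simp add: rtrancl_power)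
qed

lemma m_conn:
  assumes p1: "1 \<le> p" and phi_mono: "\<forall>r s. 0 \<le> r \<longrightarrow> r \<le> s \<longrightarrow> \<phi> s \<le> \<phi> r"
    and S: "S \<in> sets borel" and A: "A \<in> sets borel"
    and A': "\<And>b. Measurable.pred N (\<lambda>\<omega>. yf \<omega> b \<in> Af \<omega>)"
  shows "Measurable.pred N (\<lambda>\<omega>. conn_in p \<phi> (nf \<omega>, yf \<omega>, vf \<omega>) S A (Af \<omega>))"
proof -
  have E: "Measurable.pred N (\<lambda>\<omega>. (a, b) \<in> (rcm_edges p \<phi> (nf \<omega>, yf \<omega>, vf \<omega>) S)\<^sup>*)" for a b
    by (rule m_rtrancl) (rule m_edge[OF p1 phi_mono S])
  have "Measurable.pred N (\<lambda>\<omega>. \<exists>a b. alive (nf \<omega>) a \<and> alive (nf \<omega>) b \<and> yf \<omega> a \<in> S \<inter> A \<and>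
         (yf \<omega> b \<in> S \<and> yf \<omega> b \<in> Af \<omega>) \<and> (a, b) \<in> (rcm_edges p \<phi> (nf \<omega>, yf \<omega>, vf \<omega>) S)\<^sup>*)"
    using m_alive E A' S A by measurable
  moreover have "(\<lambda>\<omega>. conn_in p \<phi> (nf \<omega>, yf \<omega>, vf \<omega>) S A (Af \<omega>)) = (\<lambda>\<omega>. \<exists>a b. alive (nf \<omega>) a \<and> alive (nf \<omega>) b \<and> yf \<omega> a \<in> S \<inter> A \<and>
         (yf \<omega> b \<in> S \<and> yf \<omega> b \<in> Af \<omega>) \<and> (a, b) \<in> (rcm_edges p \<phi> (nf \<omega>, yf \<omega>, vf \<omega>) S)\<^sup>*)"
    unfolding conn_in_def prod.case by (rule ext) blast
  ultimately show ?thesis by simp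
qed

end


definition Kc :: "(real^'n) set \<Rightarrow> (real^'n \<Rightarrow> bool) \<Rightarrow> (real^'n) set" where
  "Kc B \<kappa> = {z \<in> halfint \<inter> B. \<kappa> z}"

definition Uset :: "ereal \<Rightarrow> (real \<Rightarrow> real) \<Rightarrow> (real^'n) set \<Rightarrow> (real^'n) set \<Rightarrow>
   (real^'n \<Rightarrow> bool) \<times> (int^'n \<Rightarrow> nat) \<times> ('n lab \<Rightarrow> real^'n) \<times> ('n lab set \<Rightarrow> real) \<Rightarrow> (real^'n) set" where
  "Uset p \<phi> R B \<omega> = {z \<in> Delta R B. conn_in p \<phi> (snd \<omega>) (B - cubify R) (cubify {z}) (cubify (Kc B (fst \<omega>)))}"

lemma obox_box: "obox k = box (\<chi> i. real_of_int (k$i)) (\<chi> i. real_of_int (k$i) + 1)"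
  by (auto simp: obox_def mem_box_cart)

lemma obox_borel[measurable]: "obox k \<in> sets borel"
  by (simp add: obox_box borel_open)

lemma mem_cubify_Kc: "x \<in> cubify (Kc B \<kappa>) \<longleftrightarrow> (\<exists>m. cen m \<in> B \<and> \<kappa> (cen m) \<and> x \<in> Lam (1/2) (cen m))"
proof -
  have "Kc B \<kappa> \<subseteq> halfint" by (auto simp: Kc_def)
  then have "cubify (Kc B \<kappa>) = (\<Union>z\<in>Kc B \<kappa>. Lam (1/2) z)" by (rule cubify_halfint)
  then show ?thesis unfolding Kc_def using halfint_ex halfint_cen by blast
qed

context
  fixes lam :: real and B R :: "(real^'n) set" and K_law :: "(real^'n \<Rightarrow> bool) measure"
    and p :: ereal and \<phi> :: "real \<Rightarrow> real"
  assumes K_sets: "sets K_law = sets (\<Pi>\<^sub>M z\<in>halfint \<inter> B. count_space (UNIV :: bool set))"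
    and B: "B = cubify (B \<inter> halfint)"
    and p1: "1 \<le> p"
    and phi_mono: "\<forall>r s. 0 \<le> r \<longrightarrow> r \<le> s \<longrightarrow> \<phi> s \<le> \<phi> r"
begin

lemma B_borel[measurable]: "B \<in> sets borel"
  by (subst B) (rule cubify_borel)

lemma m_comp:
  "(\<lambda>\<omega>. fst (snd \<omega>)) \<in> measurable (K_law \<Otimes>\<^sub>M rcm_law lam) (count_law lam)"
  "(\<lambda>\<omega>. fst (snd (snd \<omega>))) \<in> measurable (K_law \<Otimes>\<^sub>M rcm_law lam) pos_law"
  "(\<lambda>\<omega>. snd (snd (snd \<omega>))) \<in> measurable (K_law \<Otimes>\<^sub>M rcm_law lam) edge_law"
  unfolding rcm_law_def by measurable

lemma m_kappa:
  assumes z: "z \<in> halfint \<inter> B"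
  shows "Measurable.pred (K_law \<Otimes>\<^sub>M rcm_law lam) (\<lambda>\<omega>. fst \<omega> z)"
proof -
  have "(\<lambda>\<kappa>. \<kappa> z) \<in> measurable (\<Pi>\<^sub>M z\<in>halfint \<inter> B. count_space (UNIV :: bool set)) (count_space UNIV)"
    using z by measurable
  then have "(\<lambda>\<kappa>. \<kappa> z) \<in> measurable K_law (count_space UNIV)"
    by (subst measurable_cong_sets[OF K_sets refl])
  then have "(\<lambda>\<omega>. fst \<omega> z) \<in> measurable (K_law \<Otimes>\<^sub>M rcm_law lam) (count_space UNIV)"
    by measurable
  then show ?thesis by measurable
qed

lemma m_kappa':
  "Measurable.pred (K_law \<Otimes>\<^sub>M rcm_law lam) (\<lambda>\<omega>. cen m \<in> B \<and> fst \<omega> (cen m) \<and> P \<omega>)"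
  if "Measurable.pred (K_law \<Otimes>\<^sub>M rcm_law lam) P"
proof (cases "cen m \<in> B")
  case True
  then have "cen m \<in> halfint \<inter> B" using halfint_cen by blast
  then show ?thesis using m_kappa that True by measurable
qed simp

lemma m_inK:
  "Measurable.pred (K_law \<Otimes>\<^sub>M rcm_law lam) (\<lambda>\<omega>. fst (snd (snd \<omega>)) b \<in> cubify (Kc B (fst \<omega>)))"
proof -
  have X: "Measurable.pred (K_law \<Otimes>\<^sub>M rcm_law lam) (\<lambda>\<omega>. fst (snd (snd \<omega>)) b \<in> Lam (1/2) (cen m))" for m
    using m_pos[OF m_comp] by measurable
  have "Measurable.pred (K_law \<Otimes>\<^sub>M rcm_law lam)
     (\<lambda>\<omega>. \<exists>m. cen m \<in> B \<and> fst \<omega> (cen m) \<and> fst (snd (snd \<omega>)) b \<in> Lam (1/2) (cen m))"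
  proof (rule pred_intros_countable)
    fix m show "Measurable.pred (K_law \<Otimes>\<^sub>M rcm_law lam)
     (\<lambda>\<omega>. cen m \<in> B \<and> fst \<omega> (cen m) \<and> fst (snd (snd \<omega>)) b \<in> Lam (1/2) (cen m))"
      by (rule m_kappa') (rule X)
  qed
  then show ?thesis unfolding mem_cubify_Kc .
qed

lemma m_conn_Om:
  assumes S: "S \<in> sets borel" and A: "A \<in> sets borel"
  shows "Measurable.pred (K_law \<Otimes>\<^sub>M rcm_law lam) (\<lambda>\<omega>. conn_in p \<phi> (snd \<omega>) S A (cubify (Kc B (fst \<omega>))))"
proof -
  have "Measurable.pred (K_law \<Otimes>\<^sub>M rcm_law lam)
     (\<lambda>\<omega>. conn_in p \<phi> (fst (snd \<omega>), fst (snd (snd \<omega>)), snd (snd (snd \<omega>))) S A (cubify (Kc B (fst \<omega>))))"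
    by (rule m_conn[OF m_comp p1 phi_mono S A m_inK])
  then show ?thesis by simp
qed

lemma m_Uset: "Measurable.pred (K_law \<Otimes>\<^sub>M rcm_law lam) (\<lambda>\<omega>. z \<in> Uset p \<phi> R B \<omega>)"
proof (cases "z \<in> Delta R B")
  case True
  have "Measurable.pred (K_law \<Otimes>\<^sub>M rcm_law lam)
     (\<lambda>\<omega>. conn_in p \<phi> (snd \<omega>) (B - cubify R) (cubify {z}) (cubify (Kc B (fst \<omega>))))"
    by (rule m_conn_Om) measurable
  then show ?thesis using True by (simp add: Uset_def)
next
  case False then show ?thesis by (simp add: Uset_def)
qed

end


definition goodY :: "('n lab \<Rightarrow> real^'n) \<Rightarrow> bool" where
  "goodY y = (\<forall>a. y a \<in> obox (fst a))"
definition goodV :: "('n lab set \<Rightarrow> real) \<Rightarrow> bool" where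
  "goodV v = (\<forall>a b::'n lab. a \<noteq> b \<longrightarrow> 0 \<le> v {a, b})"
definition goodK :: "(real^'n) set \<Rightarrow> (real^'n) set \<Rightarrow> (real^'n \<Rightarrow> bool) \<Rightarrow> bool" where
  "goodK R B \<kappa> = (plusB R B \<inter> cubify (Kc B \<kappa>) = {})"

lemma unit_cube_measure: "emeasure lborel (unit_cube k) = 1"
proof -
  have fin: "emeasure lborel (unit_cube k) \<noteq> \<top>"
    unfolding unit_cube_def using emeasure_lborel_cbox_finite by (simp add: less_top)
  have "emeasure lborel (unit_cube k) = ennreal (measure lborel (unit_cube k))"
    using fin by (rule emeasure_eq_ennreal_measure)
  also have "measure lborel (unit_cube k) = 1"
  proof -
    have "unit_cube k \<noteq> {}" using obox_sub[of k] obox_cen[of k] by blast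
    then show ?thesis unfolding unit_cube_def by (subst content_cbox_cart) simp_all
  qed
  finally show ?thesis by simp
qed

lemma prob_uniform_cube: "prob_space (uniform_measure lborel (unit_cube k))"
  by (rule prob_space_uniform_measure) (simp_all add: unit_cube_measure)

lemma prob_uniform_01: "prob_space (uniform_measure lborel {0..1::real})"
  by (rule prob_space_uniform_measure) simp_all

lemma prob_count: "prob_space (count_law lam)"
  unfolding count_law_def by (intro prob_space_PiM) (simp add: prob_space_measure_pmf)

lemma prob_pos: "prob_space pos_law"
  unfolding pos_law_def by (intro prob_space_PiM prob_uniform_cube)

lemma prob_edge: "prob_space edge_law"
  unfolding edge_law_def by (intro prob_space_PiM prob_uniform_01)

lemma prob_rcm: "prob_space (rcm_law lam)"
  unfolding rcm_law_def by (intro prob_space_pair prob_count prob_pos prob_edge)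

lemma m_goodY: "Measurable.pred pos_law goodY"
proof -
  have "(\<lambda>y. y a) \<in> borel_measurable pos_law" for a :: "'n::finite lab"
  proof -
    have 1: "(\<lambda>y. y a) \<in> measurable pos_law (uniform_measure lborel (unit_cube (fst a)))"
      unfolding pos_law_def by (rule measurable_component_singleton) simp
    have eq: "measurable pos_law (uniform_measure lborel (unit_cube (fst a))) = measurable pos_law borel"
      by (rule measurable_cong_sets) simp_all
    from 1 show ?thesis unfolding eq .
  qed
  then have "Measurable.pred pos_law (\<lambda>y. \<forall>a::'n::finite lab. y a \<in> obox (fst a))"
    by (intro pred_intros_countable pred_sets2[OF obox_borel])
  then show ?thesis unfolding goodY_def .
qed

lemma m_goodV: "Measurable.pred edge_law (goodV :: ('n::finite lab set \<Rightarrow> real) \<Rightarrow> bool)"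
proof -
  have "Measurable.pred edge_law (\<lambda>v. a \<noteq> b \<longrightarrow> 0 \<le> v {a, b})" for a b :: "'n::finite lab"
  proof (cases "a = b")
    case False
    then have "{a, b} \<in> {S. card S = 2}" by simp
    then have 1: "(\<lambda>v. v {a, b}) \<in> measurable edge_law (uniform_measure lborel {0..1::real})"
      unfolding edge_law_def by (rule measurable_component_singleton)
    have eq: "measurable edge_law (uniform_measure lborel {0..1::real}) = measurable edge_law borel"
      by (rule measurable_cong_sets) simp_all
    from 1 have "(\<lambda>v. v {a, b}) \<in> borel_measurable edge_law" unfolding eq .
    then have "Measurable.pred edge_law (\<lambda>v. 0 \<le> v {a, b})" by measurable
    moreover have "(\<lambda>v::'n lab set \<Rightarrow> real. a \<noteq> b \<longrightarrow> 0 \<le> v {a, b}) = (\<lambda>v. 0 \<le> v {a, b})"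
      using False by auto
    ultimately show ?thesis by (simp only:)
  next
    case True
    then have eq: "(\<lambda>v::'n lab set \<Rightarrow> real. a \<noteq> b \<longrightarrow> 0 \<le> v {a, b}) = (\<lambda>v. True)" by auto
    show ?thesis unfolding eq by (rule measurable_const) simp
  qed
  then have "Measurable.pred edge_law (\<lambda>v. \<forall>a b::'n::finite lab. a \<noteq> b \<longrightarrow> 0 \<le> v {a, b})"
    by (intro pred_intros_countable)
  then show ?thesis unfolding goodV_def .
qed

lemma AE_goodY: "AE y in pos_law. goodY y"
  unfolding goodY_def AE_all_countable
proof
  fix a :: "'n::finite lab"
  let ?a = "(\<chi> i. real_of_int (fst a $ i))" and ?b = "(\<chi> i. real_of_int (fst a $ i) + 1)"
  have cb: "unit_cube (fst a) = cbox ?a ?b" by (simp add: unit_cube_def)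
  have ob: "obox (fst a) = box ?a ?b" by (simp add: obox_box)
  have "emeasure lborel (cbox ?a ?b - box ?a ?b) = emeasure lborel (cbox ?a ?b) - emeasure lborel (box ?a ?b)"
    using emeasure_lborel_box_finite[of ?a ?b] by (intro emeasure_Diff) (auto simp: box_subset_cbox)
  also have "\<dots> = 0" by (simp add: emeasure_lborel_cbox_eq emeasure_lborel_box_eq)
  finally have "cbox ?a ?b - box ?a ?b \<in> null_sets lborel" by (auto simp: null_sets_def)
  then have "AE x in lborel. x \<in> unit_cube (fst a) \<longrightarrow> x \<in> obox (fst a)"
    by (rule AE_I') (auto simp: cb ob)
  then have "AE x in uniform_measure lborel (unit_cube (fst a)). x \<in> obox (fst a)"
    by (intro AE_uniform_measureI) (auto simp: unit_cube_def)
  then show "AE y in pos_law. y a \<in> obox (fst a)"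
    unfolding pos_law_def by (rule AE_PiM_component[OF prob_uniform_cube UNIV_I])
qed

lemma AE_goodV: "AE v in edge_law. goodV (v :: 'n::finite lab set \<Rightarrow> real)"
  unfolding goodV_def AE_all_countable
proof (intro allI)
  fix a b :: "'n::finite lab"
  show "AE v in edge_law. a \<noteq> b \<longrightarrow> 0 \<le> v {a, b}"
  proof (cases "a = b")
    case False
    then have ab: "{a, b} \<in> {S. card S = 2}" by simp
    have "AE x in uniform_measure lborel {0..1::real}. 0 \<le> x"
      by (intro AE_uniform_measureI AE_I2) auto
    then have "AE v in edge_law. 0 \<le> v {a, b}"
      unfolding edge_law_def by (rule AE_PiM_component[OF prob_uniform_01 ab])
    then show ?thesis by (simp add: False)
  qed simp
qed


lemma iter_bound:
  fixes c :: ennreal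
  assumes pK: "prob_space K" and pC: "prob_space C" and pE: "prob_space PE"
    and X: "X \<in> sets (K \<Otimes>\<^sub>M (C \<Otimes>\<^sub>M PE))" and Y: "Y \<in> sets (K \<Otimes>\<^sub>M (C \<Otimes>\<^sub>M PE))"
    and pw: "\<And>\<kappa> w. \<kappa> \<in> space K \<Longrightarrow> w \<in> space PE \<Longrightarrow>
       c * emeasure C {n. (\<kappa>, n, w) \<in> X} \<le> emeasure C {n. (\<kappa>, n, w) \<in> Y}"
  shows "c * emeasure (K \<Otimes>\<^sub>M (C \<Otimes>\<^sub>M PE)) X \<le> emeasure (K \<Otimes>\<^sub>M (C \<Otimes>\<^sub>M PE)) Y"
proof -
  interpret K: prob_space K by fact
  interpret C: prob_space C by fact
  interpret E: prob_space PE by fact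
  interpret R: prob_space "C \<Otimes>\<^sub>M PE" by (intro prob_space_pair pC pE)
  interpret CE: pair_sigma_finite C PE ..
  interpret KR: pair_sigma_finite K "C \<Otimes>\<^sub>M PE" ..
  have inner: "c * emeasure (C \<Otimes>\<^sub>M PE) (Pair \<kappa> -` X) \<le> emeasure (C \<Otimes>\<^sub>M PE) (Pair \<kappa> -` Y)"
    if k: "\<kappa> \<in> space K" for \<kappa>
  proof -
    have Xk: "Pair \<kappa> -` X \<in> sets (C \<Otimes>\<^sub>M PE)" using X by (rule sets_Pair1)
    have Yk: "Pair \<kappa> -` Y \<in> sets (C \<Otimes>\<^sub>M PE)" using Y by (rule sets_Pair1)
    have "c * emeasure (C \<Otimes>\<^sub>M PE) (Pair \<kappa> -` X) =
          c * (\<integral>\<^sup>+w. emeasure C ((\<lambda>n. (n, w)) -` (Pair \<kappa> -` X)) \<partial>PE)"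
      by (simp add: CE.emeasure_pair_measure_alt2[OF Xk])
    also have "\<dots> = (\<integral>\<^sup>+w. c * emeasure C ((\<lambda>n. (n, w)) -` (Pair \<kappa> -` X)) \<partial>PE)"
      by (rule nn_integral_cmult[symmetric]) (rule CE.measurable_emeasure_Pair2[OF Xk])
    also have "\<dots> \<le> (\<integral>\<^sup>+w. emeasure C ((\<lambda>n. (n, w)) -` (Pair \<kappa> -` Y)) \<partial>PE)"
    proof (rule nn_integral_mono)
      fix w assume "w \<in> space PE"
      then show "c * emeasure C ((\<lambda>n. (n, w)) -` (Pair \<kappa> -` X)) \<le> emeasure C ((\<lambda>n. (n, w)) -` (Pair \<kappa> -` Y))"
        using pw[OF k] by (simp add: vimage_def)
    qed
    also have "\<dots> = emeasure (C \<Otimes>\<^sub>M PE) (Pair \<kappa> -` Y)"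
      by (simp add: CE.emeasure_pair_measure_alt2[OF Yk])
    finally show ?thesis .
  qed
  have "c * emeasure (K \<Otimes>\<^sub>M (C \<Otimes>\<^sub>M PE)) X = c * (\<integral>\<^sup>+\<kappa>. emeasure (C \<Otimes>\<^sub>M PE) (Pair \<kappa> -` X) \<partial>K)"
    by (simp add: R.emeasure_pair_measure_alt[OF X])
  also have "\<dots> = (\<integral>\<^sup>+\<kappa>. c * emeasure (C \<Otimes>\<^sub>M PE) (Pair \<kappa> -` X) \<partial>K)"
    by (rule nn_integral_cmult[symmetric]) (rule R.measurable_emeasure_Pair[OF X])
  also have "\<dots> \<le> (\<integral>\<^sup>+\<kappa>. emeasure (C \<Otimes>\<^sub>M PE) (Pair \<kappa> -` Y) \<partial>K)"
    by (rule nn_integral_mono) (rule inner)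
  also have "\<dots> = emeasure (K \<Otimes>\<^sub>M (C \<Otimes>\<^sub>M PE)) Y"
    by (simp add: R.emeasure_pair_measure_alt[OF Y])
  finally show ?thesis .
qed

lemma card_touch:
  fixes m :: "int^'n"
  shows "finite {k. unit_cube k \<inter> Lam (1/2) (cen m) \<noteq> {}} \<and>
   card {k. unit_cube k \<inter> Lam (1/2) (cen m) \<noteq> {}} \<le> 3 ^ CARD('n)"
proof -
  let ?T = "{k. unit_cube k \<inter> Lam (1/2) (cen m) \<noteq> {}}"
  let ?F = "PiE (UNIV :: 'n set) (\<lambda>_. {-1, 0, 1 :: int})"
  let ?g = "\<lambda>f. (\<chi> i. m$i + f i) :: int^'n"
  have sub: "?T \<subseteq> ?g ` ?F"
  proof
    fix k assume "k \<in> ?T"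
    then obtain w where w: "w \<in> unit_cube k" "w \<in> unit_cube m" using unit_cube_Lam by blast
    have d: "k$i - m$i \<in> {-1, 0, 1}" for i
    proof -
      have "real_of_int (k$i) \<le> w$i" "w$i \<le> real_of_int (k$i) + 1"
           "real_of_int (m$i) \<le> w$i" "w$i \<le> real_of_int (m$i) + 1"
        using w by (auto simp: unit_cube_def mem_box_cart)
      then have "k$i \<le> m$i + 1" "m$i \<le> k$i + 1" by linarith+
      then show ?thesis by auto
    qed
    show "k \<in> ?g ` ?F"
    proof (rule image_eqI[of _ _ "restrict (\<lambda>i. k$i - m$i) UNIV"])
      show "k = ?g (restrict (\<lambda>i. k$i - m$i) UNIV)" by (simp add: vec_eq_iff)
      show "restrict (\<lambda>i. k$i - m$i) UNIV \<in> ?F" using d by (simp add: PiE_iff)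
    qed
  qed
  have fF: "finite ?F" by (intro finite_PiE) auto
  have "card ?T \<le> card (?g ` ?F)" using sub fF by (intro card_mono) auto
  also have "\<dots> \<le> card ?F" by (rule card_image_le[OF fF])
  also have "\<dots> = 3 ^ CARD('n)" by (simp add: card_PiE numeral_3_eq_3)
  finally show ?thesis using sub fF finite_subset by blast
qed

lemma small_iff:
  assumes U: "U \<subseteq> halfint"
  shows "(finite U \<and> card U \<le> t) \<longleftrightarrow>
         (\<forall>xs :: (int^'n) list. distinct xs \<and> length xs = Suc t \<longrightarrow> \<not> (\<forall>i<length xs. cen (xs ! i) \<in> U))"
proof
  assume a: "finite U \<and> card U \<le> t"
  show "\<forall>xs :: (int^'n) list. distinct xs \<and> length xs = Suc t \<longrightarrow> \<not> (\<forall>i<length xs. cen (xs ! i) \<in> U)"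
  proof (intro allI impI notI)
    fix xs :: "(int^'n) list"
    assume xs: "distinct xs \<and> length xs = Suc t" and all: "\<forall>i<length xs. cen (xs ! i) \<in> U"
    have "cen ` set xs \<subseteq> U" using all by (auto simp: in_set_conv_nth)
    then have "card (cen ` set xs) \<le> card U" using a by (intro card_mono) auto
    moreover have "card (cen ` set xs) = Suc t"
      using xs cen_inj by (subst card_image) (auto simp: inj_on_def distinct_card)
    ultimately show False using a by simp
  qed
next
  assume b: "\<forall>xs :: (int^'n) list. distinct xs \<and> length xs = Suc t \<longrightarrow> \<not> (\<forall>i<length xs. cen (xs ! i) \<in> U)"
  show "finite U \<and> card U \<le> t"
  proof (rule ccontr)
    assume "\<not> (finite U \<and> card U \<le> t)"
    then obtain F where F: "F \<subseteq> U" "finite F" "card F = Suc t"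
    proof (cases "finite U")
      case True
      with \<open>\<not> (finite U \<and> card U \<le> t)\<close> have "Suc t \<le> card U" by simp
      then show ?thesis using obtain_subset_with_card_n that by (metis card.infinite nat.distinct(1))
    next
      case False
      then show ?thesis using infinite_arbitrarily_large that by metis
    qed
    define G where "G = cen -` F"
    have GF: "cen ` G = F" using F(1) U halfint_range unfolding G_def by auto
    have injG: "inj_on cen G" using cen_inj by (auto simp: inj_on_def)
    have fG: "finite G" using F(2) GF injG finite_image_iff by metis
    obtain xs where xs: "set xs = G" "distinct xs" using finite_distinct_list[OF fG] by blast
    have "length xs = card G" using xs distinct_card by metis
    also have "\<dots> = card F" using GF injG card_image by metis
    finally have "length xs = Suc t" using F(3) by simp
    moreover have "\<forall>i<length xs. cen (xs ! i) \<in> U"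
      using xs(1) F(1) unfolding G_def by (auto simp: in_set_conv_nth[symmetric] dest!: nth_mem)
    ultimately show False using b xs(2) by blast
  qed
qed


definition goodO :: "(real^'n) set \<Rightarrow> (real^'n) set \<Rightarrow>
   (real^'n \<Rightarrow> bool) \<times> (int^'n \<Rightarrow> nat) \<times> ('n lab \<Rightarrow> real^'n) \<times> ('n lab set \<Rightarrow> real) \<Rightarrow> bool" where
  "goodO R B \<omega> = (goodK R B (fst \<omega>) \<and> goodY (fst (snd (snd \<omega>))) \<and> goodV (snd (snd (snd \<omega>))))"

definition hz :: "ereal \<Rightarrow> (real \<Rightarrow> real) \<Rightarrow> (real^'n) set \<Rightarrow> (real^'n) set \<Rightarrow>
   (real^'n \<Rightarrow> bool) \<times> (int^'n \<Rightarrow> nat) \<times> ('n lab \<Rightarrow> real^'n) \<times> ('n lab set \<Rightarrow> real) \<Rightarrow> bool" where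
  "hz p \<phi> R B \<omega> = (\<forall>k m. unit_cube k \<subseteq> cubify R \<longrightarrow> cen m \<in> Uset p \<phi> R B \<omega> \<longrightarrow>
      unit_cube k \<inter> Lam (1/2) (cen m) \<noteq> {} \<longrightarrow> fst (snd \<omega>) k = 0)"

lemma pred_imp_const: "(P \<Longrightarrow> Measurable.pred M Q) \<Longrightarrow> Measurable.pred M (\<lambda>x. P \<longrightarrow> Q x)"
  by (cases P) auto

lemma goodK_iff: "goodK R B \<kappa> \<longleftrightarrow> (\<forall>m. \<not> (cen m \<in> B \<and> \<kappa> (cen m) \<and> Lam (1/2) (cen m) \<inter> plusB R B \<noteq> {}))"
  unfolding goodK_def using mem_cubify_Kc[of _ B \<kappa>] by blast

lemma Uset_sub: "Uset p \<phi> R B \<omega> \<subseteq> halfint"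
  by (auto simp: Uset_def Delta_def)

lemma conn_indep_n:
  assumes gy: "goodY y" and agree: "\<And>k. \<not> unit_cube k \<subseteq> cubify R \<Longrightarrow> n k = n' k"
  shows "conn_in p \<phi> (n, y, v) (B - cubify R) X Y = conn_in p \<phi> (n', y, v) (B - cubify R) X Y"
proof -
  have al: "alive n a = alive n' a" if "y a \<in> B - cubify R" for a
  proof -
    have "y a \<in> obox (fst a)" using gy unfolding goodY_def by blast
    then have "\<not> unit_cube (fst a) \<subseteq> cubify R"
      using that obox_sub[of "fst a"] by blast
    then show ?thesis using agree by (simp add: alive_def)
  qed
  have E: "rcm_edges p \<phi> (n, y, v) (B - cubify R) = rcm_edges p \<phi> (n', y, v) (B - cubify R)"
    unfolding rcm_edges_def using al by auto
  show ?thesis unfolding conn_in_def prod.case E using al by blast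
qed

lemma Uset_indep_n:
  assumes gy: "goodY y" and agree: "\<And>k. \<not> unit_cube k \<subseteq> cubify R \<Longrightarrow> n k = n' k"
  shows "Uset p \<phi> R B (\<kappa>, n, y, v) = Uset p \<phi> R B (\<kappa>, n', y, v)"
  unfolding Uset_def using conn_indep_n[OF gy agree] by simp

lemma space_count: "space (count_law lam) = UNIV"
  by (simp add: count_law_def space_PiM PiE_UNIV_domain)

context
  fixes lam :: real and B R :: "(real^'n) set" and K_law :: "(real^'n \<Rightarrow> bool) measure"
    and p :: ereal and \<phi> :: "real \<Rightarrow> real" and t :: nat
  assumes K_sets: "sets K_law = sets (\<Pi>\<^sub>M z\<in>halfint \<inter> B. count_space (UNIV :: bool set))"
    and B: "B = cubify (B \<inter> halfint)"
    and p1: "1 \<le> p"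
    and phi_mono: "\<forall>r s. 0 \<le> r \<longrightarrow> r \<le> s \<longrightarrow> \<phi> s \<le> \<phi> r"
begin

lemma m_goodK: "Measurable.pred (K_law \<Otimes>\<^sub>M rcm_law lam) (\<lambda>\<omega>. goodK R B (fst \<omega>))"
proof -
  have "Measurable.pred (K_law \<Otimes>\<^sub>M rcm_law lam)
    (\<lambda>\<omega>. \<forall>m. \<not> (cen m \<in> B \<and> fst \<omega> (cen m) \<and> Lam (1/2) (cen m) \<inter> plusB R B \<noteq> {}))"
    by (intro pred_intros_countable pred_intros_logic(2) m_kappa'[OF K_sets B p1 phi_mono]) simp
  then show ?thesis unfolding goodK_iff .
qed

lemma m_goodO: "Measurable.pred (K_law \<Otimes>\<^sub>M rcm_law lam) (goodO R B)"
proof -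
  have 1: "Measurable.pred (K_law \<Otimes>\<^sub>M rcm_law lam) (\<lambda>\<omega>. goodY (fst (snd (snd \<omega>))))"
    by (rule measurable_compose[OF m_comp(2)[OF K_sets B p1 phi_mono] m_goodY])
  have 2: "Measurable.pred (K_law \<Otimes>\<^sub>M rcm_law lam) (\<lambda>\<omega>. goodV (snd (snd (snd \<omega>))))"
    by (rule measurable_compose[OF m_comp(3)[OF K_sets B p1 phi_mono] m_goodV])
  have "Measurable.pred (K_law \<Otimes>\<^sub>M rcm_law lam)
     (\<lambda>\<omega>. goodK R B (fst \<omega>) \<and> goodY (fst (snd (snd \<omega>))) \<and> goodV (snd (snd (snd \<omega>))))"
    by (intro pred_intros_logic(3) m_goodK 1 2)
  then show ?thesis unfolding goodO_def[abs_def] .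
qed

lemma m_smallU: "Measurable.pred (K_law \<Otimes>\<^sub>M rcm_law lam)
    (\<lambda>\<omega>. finite (Uset p \<phi> R B \<omega>) \<and> card (Uset p \<phi> R B \<omega>) \<le> t)"
proof -
  have inner: "Measurable.pred (K_law \<Otimes>\<^sub>M rcm_law lam)
    (\<lambda>\<omega>. distinct xs \<and> length xs = Suc t \<longrightarrow>
            \<not> (\<forall>i. i < length xs \<longrightarrow> cen (xs ! i) \<in> Uset p \<phi> R B \<omega>))" for xs :: "(int^'n) list"
    apply (rule pred_imp_const)
    apply (rule pred_intros_logic(2))
    apply (rule pred_intros_countable)
    apply (rule pred_imp_const)
    apply (rule m_Uset[OF K_sets B p1 phi_mono])
    done
  have "Measurable.pred (K_law \<Otimes>\<^sub>M rcm_law lam)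
    (\<lambda>\<omega>. \<forall>xs :: (int^'n) list. distinct xs \<and> length xs = Suc t \<longrightarrow>
            \<not> (\<forall>i. i < length xs \<longrightarrow> cen (xs ! i) \<in> Uset p \<phi> R B \<omega>))"
    by (rule pred_intros_countable) (rule inner)
  moreover have "(\<lambda>\<omega>. finite (Uset p \<phi> R B \<omega>) \<and> card (Uset p \<phi> R B \<omega>) \<le> t) =
     (\<lambda>\<omega>. \<forall>xs :: (int^'n) list. distinct xs \<and> length xs = Suc t \<longrightarrow>
            \<not> (\<forall>i. i < length xs \<longrightarrow> cen (xs ! i) \<in> Uset p \<phi> R B \<omega>))"
    by (rule ext) (rule small_iff[OF Uset_sub])
  ultimately show ?thesis by (simp only:)
qed

lemma m_hz: "Measurable.pred (K_law \<Otimes>\<^sub>M rcm_law lam) (hz p \<phi> R B)"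
proof -
  have c: "(\<lambda>\<omega>. fst (snd \<omega>) k) \<in> measurable (K_law \<Otimes>\<^sub>M rcm_law lam) (count_space UNIV)" for k
    by (rule m_count[OF m_comp[OF K_sets B p1 phi_mono]])
  have inner: "Measurable.pred (K_law \<Otimes>\<^sub>M rcm_law lam)
    (\<lambda>\<omega>. unit_cube k \<subseteq> cubify R \<longrightarrow> cen m \<in> Uset p \<phi> R B \<omega> \<longrightarrow>
      unit_cube k \<inter> Lam (1/2) (cen m) \<noteq> {} \<longrightarrow> fst (snd \<omega>) k = 0)" for k m :: "int^'n"
    apply (rule pred_imp_const)
    apply (rule pred_intros_logic(4))
     apply (rule m_Uset[OF K_sets B p1 phi_mono])
    apply (rule pred_imp_const)
    apply (rule measurable_compose[OF c])
    apply simp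
    done
  have "Measurable.pred (K_law \<Otimes>\<^sub>M rcm_law lam)
    (\<lambda>\<omega>. \<forall>k m. unit_cube k \<subseteq> cubify R \<longrightarrow> cen m \<in> Uset p \<phi> R B \<omega> \<longrightarrow>
      unit_cube k \<inter> Lam (1/2) (cen m) \<noteq> {} \<longrightarrow> fst (snd \<omega>) k = 0)"
    by (intro pred_intros_countable) (rule inner)
  then show ?thesis unfolding hz_def[abs_def] .
qed

lemma m_rhs: "Measurable.pred (K_law \<Otimes>\<^sub>M rcm_law lam)
   (\<lambda>\<omega>. \<not> conn_in p \<phi> (snd \<omega>) B (cubify R) (cubify (Kc B (fst \<omega>))))"
  by (intro pred_intros_logic(2) m_conn_Om[OF K_sets B p1 phi_mono]) (simp_all add: B_borel[OF K_sets B p1 phi_mono])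

end


lemma AE_rest: "AE r in rcm_law lam. goodY (fst (snd r)) \<and> goodV (snd (snd (r :: (int^'n::finite \<Rightarrow> nat) \<times> ('n lab \<Rightarrow> real^'n) \<times> ('n lab set \<Rightarrow> real))))"
proof -
  let ?P = "pos_law :: ('n lab \<Rightarrow> real^'n) measure"
  let ?E = "edge_law :: ('n lab set \<Rightarrow> real) measure"
  let ?C = "count_law lam :: (int^'n \<Rightarrow> nat) measure"
  interpret C: prob_space "?C" by (rule prob_count)
  interpret P: prob_space ?P by (rule prob_pos)
  interpret E: prob_space ?E by (rule prob_edge)
  interpret PE: prob_space "?P \<Otimes>\<^sub>M ?E" by (intro prob_space_pair prob_pos prob_edge)
  interpret PP1: pair_sigma_finite ?P ?E ..
  interpret PP2: pair_sigma_finite "?C" "?P \<Otimes>\<^sub>M ?E" ..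
  have m1: "Measurable.pred (?P \<Otimes>\<^sub>M ?E) (\<lambda>w. goodY (fst w) \<and> goodV (snd w))"
    by (intro pred_intros_logic(3) measurable_compose[OF measurable_fst m_goodY]
        measurable_compose[OF measurable_snd m_goodV])
  have m2: "Measurable.pred (?C \<Otimes>\<^sub>M (?P \<Otimes>\<^sub>M ?E))
      (\<lambda>r. goodY (fst (snd r)) \<and> goodV (snd (snd r)))"
    by (intro pred_intros_logic(3) measurable_compose[OF measurable_compose[OF measurable_snd measurable_fst] m_goodY]
        measurable_compose[OF measurable_compose[OF measurable_snd measurable_snd] m_goodV])
  have "AE w in ?P \<Otimes>\<^sub>M ?E. goodY (fst w) \<and> goodV (snd w)"
  proof (rule PP1.AE_pair_measure)
    show "{x \<in> space (?P \<Otimes>\<^sub>M ?E). goodY (fst x) \<and> goodV (snd x)} \<in> sets (?P \<Otimes>\<^sub>M ?E)"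
      using m1 unfolding pred_def .
    show "AE y in ?P. AE v in ?E. goodY (fst (y, v)) \<and> goodV (snd (y, v))"
      using AE_goodY by eventually_elim (use AE_goodV in simp)
  qed
  then have "AE r in ?C \<Otimes>\<^sub>M (?P \<Otimes>\<^sub>M ?E). goodY (fst (snd r)) \<and> goodV (snd (snd r))"
  proof (intro PP2.AE_pair_measure)
    show "{x \<in> space (?C \<Otimes>\<^sub>M (?P \<Otimes>\<^sub>M ?E)). goodY (fst (snd x)) \<and> goodV (snd (snd x))}
       \<in> sets (?C \<Otimes>\<^sub>M (?P \<Otimes>\<^sub>M ?E))"
      using m2 unfolding pred_def .
  qed simp
  then show ?thesis unfolding rcm_law_def .
qed

lemma AE_goodO:
  fixes B R :: "(real^'n::finite) set" and p :: ereal and \<phi> :: "real \<Rightarrow> real"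
  assumes K_prob: "prob_space K_law"
    and K_sets: "sets K_law = sets (\<Pi>\<^sub>M z\<in>halfint \<inter> B. count_space (UNIV :: bool set))"
    and B: "B = cubify (B \<inter> halfint)" and p1: "1 \<le> p"
    and phi_mono: "\<forall>r s. 0 \<le> r \<longrightarrow> r \<le> s \<longrightarrow> \<phi> s \<le> \<phi> r"
    and K_sep: "AE \<kappa> in K_law. plusB R B \<inter> cubify {z \<in> halfint \<inter> B. \<kappa> z} = {}"
  shows "AE \<omega> in K_law \<Otimes>\<^sub>M rcm_law lam. goodO R B \<omega>"
proof -
  interpret K: prob_space K_law by fact
  interpret RL: prob_space "rcm_law lam" by (rule prob_rcm)
  interpret PP: pair_sigma_finite K_law "rcm_law lam" ..
  have m: "Measurable.pred (K_law \<Otimes>\<^sub>M rcm_law lam) (goodO R B)"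
    using K_sets B p1 phi_mono by (rule m_goodO)
  show ?thesis
  proof (rule PP.AE_pair_measure)
    show "{x \<in> space (K_law \<Otimes>\<^sub>M rcm_law lam). goodO R B x} \<in> sets (K_law \<Otimes>\<^sub>M rcm_law lam)"
      using m unfolding pred_def .
    have K': "AE \<kappa> in K_law. goodK R B \<kappa>" using K_sep by (simp add: goodK_def Kc_def)
    show "AE \<kappa> in K_law. AE r in rcm_law lam. goodO R B (\<kappa>, r)"
      using K' by eventually_elim (use AE_rest in \<open>simp add: goodO_def\<close>)
  qed
qed


lemma Q_bound:
  fixes U :: "(real^'n::finite) set"
  assumes U: "U \<subseteq> halfint" "finite U" "card U \<le> t"
  shows "finite {k. unit_cube k \<subseteq> cubify R \<and> (\<exists>m. cen m \<in> U \<and> unit_cube k \<inter> Lam (1/2) (cen m) \<noteq> {})}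
    \<and> card {k. unit_cube k \<subseteq> cubify R \<and> (\<exists>m. cen m \<in> U \<and> unit_cube k \<inter> Lam (1/2) (cen m) \<noteq> {})}
        \<le> 3 ^ CARD('n) * t"
proof -
  let ?Q = "{k. unit_cube k \<subseteq> cubify R \<and> (\<exists>m. cen m \<in> U \<and> unit_cube k \<inter> Lam (1/2) (cen m) \<noteq> {})}"
  let ?T = "\<lambda>m. {k. unit_cube k \<inter> Lam (1/2) (cen m) \<noteq> {}}"
  let ?M = "cen -` U"
  have injc: "inj cen" using cen_inj by (auto simp: inj_def)
  have fM: "finite ?M" using U(2) injc by (intro finite_vimageI) auto
  have cM: "card ?M = card U" using U(1) injc halfint_range by (intro card_vimage_inj) auto
  have sub: "?Q \<subseteq> (\<Union>m\<in>?M. ?T m)" by auto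
  have fU: "finite (\<Union>m\<in>?M. ?T m)" using fM card_touch by blast
  have "card ?Q \<le> card (\<Union>m\<in>?M. ?T m)" using sub fU by (rule card_mono[rotated])
  also have "\<dots> \<le> (\<Sum>m\<in>?M. card (?T m))" using fM by (rule card_UN_le)
  also have "\<dots> \<le> of_nat (card ?M) * 3 ^ CARD('n)" by (rule sum_bounded_above) (use card_touch in blast)
  also have "\<dots> \<le> 3 ^ CARD('n) * t" using cM U(3) by simp
  finally show ?thesis using sub fU finite_subset by blast
qed

lemma pointwise:
  fixes B R :: "(real^'n::finite) set" and p :: ereal and \<phi> :: "real \<Rightarrow> real" and t :: nat and lam :: real
    and K_law :: "(real^'n \<Rightarrow> bool) measure"
  defines "A \<equiv> {\<omega> \<in> space (K_law \<Otimes>\<^sub>M rcm_law lam). goodO R B \<omega> \<and>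
                 (finite (Uset p \<phi> R B \<omega>) \<and> card (Uset p \<phi> R B \<omega>) \<le> t)}"
    and "D \<equiv> {\<omega> \<in> space (K_law \<Otimes>\<^sub>M rcm_law lam). goodO R B \<omega> \<and>
                 (finite (Uset p \<phi> R B \<omega>) \<and> card (Uset p \<phi> R B \<omega>) \<le> t) \<and> hz p \<phi> R B \<omega>}"
  assumes lam: "0 < lam"
    and K_sets: "sets K_law = sets (\<Pi>\<^sub>M z\<in>halfint \<inter> B. count_space (UNIV :: bool set))"
    and B: "B = cubify (B \<inter> halfint)" and p1: "1 \<le> p"
    and phi_mono: "\<forall>r s. 0 \<le> r \<longrightarrow> r \<le> s \<longrightarrow> \<phi> s \<le> \<phi> r"
    and k: "\<kappa> \<in> space K_law" and w: "w \<in> space (pos_law \<Otimes>\<^sub>M edge_law)"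
  shows "ennreal (exp (- lam * real (3 ^ CARD('n) * t))) * emeasure (count_law lam) {n. (\<kappa>, n, w) \<in> A}
         \<le> emeasure (count_law lam) {n. (\<kappa>, n, w) \<in> D}"
proof -
  obtain y v where yv: "w = (y, v)" by (cases w)
  let ?Om = "K_law \<Otimes>\<^sub>M rcm_law lam"
  have mA: "Measurable.pred ?Om (\<lambda>\<omega>. goodO R B \<omega> \<and> (finite (Uset p \<phi> R B \<omega>) \<and> card (Uset p \<phi> R B \<omega>) \<le> t))"
    using K_sets B p1 phi_mono by (intro pred_intros_logic(3) m_goodO m_smallU)
  have mD: "Measurable.pred ?Om (\<lambda>\<omega>. goodO R B \<omega> \<and> (finite (Uset p \<phi> R B \<omega>) \<and> card (Uset p \<phi> R B \<omega>) \<le> t) \<and> hz p \<phi> R B \<omega>)"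
    using K_sets B p1 phi_mono by (intro pred_intros_logic(3) m_goodO m_smallU m_hz)
  have Am: "A \<in> sets ?Om" using mA unfolding pred_def A_def .
  have Dm: "D \<in> sets ?Om" using mD unfolding pred_def D_def .
  have sec: "{n. (\<kappa>, n, w) \<in> X} \<in> sets (count_law lam)" if X: "X \<in> sets ?Om" for X
  proof -
    have "Pair \<kappa> -` X \<in> sets (count_law lam \<Otimes>\<^sub>M (pos_law \<Otimes>\<^sub>M edge_law))"
      using sets_Pair1[OF X] unfolding rcm_law_def .
    from sets_Pair2[OF this] show ?thesis by (simp add: vimage_def)
  qed
  have sp: "(\<kappa>, n, w) \<in> space ?Om" for n
    using k w by (simp add: space_pair_measure rcm_law_def space_count)
  show ?thesis
  proof (cases "goodO R B (\<kappa>, undefined, y, v)")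
    case False
    then have "{n. (\<kappa>, n, w) \<in> A} = {}" by (auto simp: A_def yv goodO_def)
    then show ?thesis by simp
  next
    case True
    then have gy: "goodY y" by (simp add: goodO_def)
    let ?J = "{k. unit_cube k \<subseteq> cubify R}"
    let ?Q = "\<lambda>n. {k. unit_cube k \<subseteq> cubify R \<and>
        (\<exists>m. cen m \<in> Uset p \<phi> R B (\<kappa>, n, y, v) \<and> unit_cube k \<inter> Lam (1/2) (cen m) \<noteq> {})}"
    have gO: "goodO R B (\<kappa>, n, y, v)" for n using True by (simp add: goodO_def)
    have Ueq: "Uset p \<phi> R B (\<kappa>, n, y, v) = Uset p \<phi> R B (\<kappa>, n', y, v)"
      if "\<And>k. k \<notin> ?J \<Longrightarrow> n k = n' k" for n n'
      by (rule Uset_indep_n[OF gy]) (use that in auto)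
    have "ennreal (exp (- lam * real (3 ^ CARD('n) * t))) * emeasure (PiM UNIV (\<lambda>_. measure_pmf (poisson_pmf lam))) {n. (\<kappa>, n, w) \<in> A}
         \<le> emeasure (PiM UNIV (\<lambda>_. measure_pmf (poisson_pmf lam))) {n. (\<kappa>, n, w) \<in> D}"
    proof (rule count_zero_bound[where J="?J" and Q="?Q"])
      show "0 < lam" by fact
      show "{n. (\<kappa>, n, w) \<in> D} \<in> sets (PiM UNIV (\<lambda>_. measure_pmf (poisson_pmf lam)))"
        using sec[OF Dm] unfolding count_law_def .
      show "{n. (\<kappa>, n, w) \<in> A} \<in> sets (PiM UNIV (\<lambda>_. measure_pmf (poisson_pmf lam)))"
        using sec[OF Am] unfolding count_law_def .
      fix n n' :: "int^'n \<Rightarrow> nat"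
      assume ag: "\<And>k. k \<notin> ?J \<Longrightarrow> n k = n' k"
      show "n \<in> {n. (\<kappa>, n, w) \<in> A} \<longleftrightarrow> n' \<in> {n. (\<kappa>, n, w) \<in> A}"
        using Ueq[OF ag] sp gO by (simp add: A_def yv)
      show "?Q n = ?Q n'" using Ueq[OF ag] by simp
    next
      fix n :: "int^'n \<Rightarrow> nat"
      show "n \<in> {n. (\<kappa>, n, w) \<in> D} \<longleftrightarrow> n \<in> {n. (\<kappa>, n, w) \<in> A} \<and> (\<forall>k\<in>?Q n. n k = 0)"
        by (simp add: A_def D_def yv hz_def) blast
    next
      fix n :: "int^'n \<Rightarrow> nat"
      assume "n \<in> {n. (\<kappa>, n, w) \<in> A}"
      then have "finite (Uset p \<phi> R B (\<kappa>, n, y, v)) \<and> card (Uset p \<phi> R B (\<kappa>, n, y, v)) \<le> t"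
        by (simp add: A_def yv)
      then show "finite (?Q n) \<and> ?Q n \<subseteq> ?J \<and> card (?Q n) \<le> 3 ^ CARD('n) * t"
        using Q_bound[OF Uset_sub, of p \<phi> R B "(\<kappa>, n, y, v)" t R] by auto
    qed
    then show ?thesis unfolding count_law_def .
  qed
qed


theorem lemma2p3:
  fixes p :: ereal and \<phi> :: "real \<Rightarrow> real" and lam :: real
    and R B :: "(real^'n) set" and K_law :: "(real^'n \<Rightarrow> bool) measure" and t :: nat
  assumes d3: "CARD('n) \<ge> 3"
    and p1: "1 \<le> p"
    and phi_range: "\<forall>r\<ge>0. 0 \<le> \<phi> r \<and> \<phi> r \<le> 1"
    and phi_mono: "\<forall>r s. 0 \<le> r \<longrightarrow> r \<le> s \<longrightarrow> \<phi> s \<le> \<phi> r"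
    and phi_sup: "{r. r > 0 \<and> \<phi> r > 0} \<noteq> {} \<and> bdd_above {r. r > 0 \<and> \<phi> r > 0}
                  \<and> Sup {r. r > 0 \<and> \<phi> r > 0} = 1"
    and lam: "lam > 0"
    and B: "B = cubify (B \<inter> halfint)"
    and K_prob: "prob_space K_law"
    and K_sets: "sets K_law = sets (\<Pi>\<^sub>M z\<in>halfint \<inter> B. count_space (UNIV :: bool set))"
    and K_sep: "AE \<kappa> in K_law. plusB R B \<inter> cubify {z \<in> halfint \<inter> B. \<kappa> z} = {}"
  shows "measure (K_law \<Otimes>\<^sub>M rcm_law lam)
           {\<omega> \<in> space (K_law \<Otimes>\<^sub>M rcm_law lam).
              (let K = {z \<in> halfint \<inter> B. fst \<omega> z};
                   U = {z \<in> Delta R B. conn_in p \<phi> (snd \<omega>) (B - cubify R) (cubify {z}) (cubify K)}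
               in finite U \<and> card U \<le> t)}
         \<le> exp (3 ^ CARD('n) * lam * real t) *
           measure (K_law \<Otimes>\<^sub>M rcm_law lam)
           {\<omega> \<in> space (K_law \<Otimes>\<^sub>M rcm_law lam).
              \<not> conn_in p \<phi> (snd \<omega>) B (cubify R) (cubify {z \<in> halfint \<inter> B. fst \<omega> z})}"
proof -
  let ?Om = "K_law \<Otimes>\<^sub>M rcm_law lam"
  let ?U = "Uset p \<phi> R B"
  define N :: nat where "N = 3 ^ CARD('n) * t"
  define A where "A = {\<omega> \<in> space ?Om. goodO R B \<omega> \<and> (finite (?U \<omega>) \<and> card (?U \<omega>) \<le> t)}"
  define D where "D = {\<omega> \<in> space ?Om. goodO R B \<omega> \<and> (finite (?U \<omega>) \<and> card (?U \<omega>) \<le> t) \<and> hz p \<phi> R B \<omega>}"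
  define L where "L = {\<omega> \<in> space ?Om. finite (?U \<omega>) \<and> card (?U \<omega>) \<le> t}"
  define Rs where "Rs = {\<omega> \<in> space ?Om. \<not> conn_in p \<phi> (snd \<omega>) B (cubify R) (cubify (Kc B (fst \<omega>)))}"
  have Leq: "{\<omega> \<in> space ?Om.
              (let K = {z \<in> halfint \<inter> B. fst \<omega> z};
                   U = {z \<in> Delta R B. conn_in p \<phi> (snd \<omega>) (B - cubify R) (cubify {z}) (cubify K)}
               in finite U \<and> card U \<le> t)} = L"
    by (simp add: L_def Uset_def Kc_def Let_def)
  have Req: "{\<omega> \<in> space ?Om. \<not> conn_in p \<phi> (snd \<omega>) B (cubify R) (cubify {z \<in> halfint \<inter> B. fst \<omega> z})} = Rs"
    by (simp add: Rs_def Kc_def)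
  interpret K: prob_space K_law by (rule K_prob)
  interpret Om: prob_space ?Om by (intro prob_space_pair K_prob prob_rcm)
  have mL: "L \<in> sets ?Om"
    using m_smallU[OF K_sets B p1 phi_mono] unfolding pred_def L_def .
  have mA': "Measurable.pred ?Om (\<lambda>\<omega>. goodO R B \<omega> \<and> (finite (?U \<omega>) \<and> card (?U \<omega>) \<le> t))"
    using K_sets B p1 phi_mono by (intro pred_intros_logic(3) m_goodO m_smallU)
  have mD': "Measurable.pred ?Om (\<lambda>\<omega>. goodO R B \<omega> \<and> (finite (?U \<omega>) \<and> card (?U \<omega>) \<le> t) \<and> hz p \<phi> R B \<omega>)"
    using K_sets B p1 phi_mono by (intro pred_intros_logic(3) m_goodO m_smallU m_hz)
  have mA: "A \<in> sets ?Om" using mA' unfolding pred_def A_def .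
  have mD: "D \<in> sets ?Om" using mD' unfolding pred_def D_def .
  have mR: "Rs \<in> sets ?Om" using m_rhs[OF K_sets B p1 phi_mono] unfolding pred_def Rs_def .
  have AEg: "AE \<omega> in ?Om. goodO R B \<omega>"
    by (rule AE_goodO[OF K_prob K_sets B p1 phi_mono K_sep])
  have e1: "emeasure ?Om L = emeasure ?Om A"
  proof (rule emeasure_eq_AE)
    show "AE \<omega> in ?Om. (\<omega> \<in> L) = (\<omega> \<in> A)"
      using AEg by eventually_elim (auto simp: L_def A_def)
  qed (fact mL, fact mA)
  have e2: "ennreal (exp (- lam * real N)) * emeasure ?Om A \<le> emeasure ?Om D"
  proof -
    have "ennreal (exp (- lam * real N)) * emeasure (K_law \<Otimes>\<^sub>M (count_law lam \<Otimes>\<^sub>M (pos_law \<Otimes>\<^sub>M edge_law))) A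
          \<le> emeasure (K_law \<Otimes>\<^sub>M (count_law lam \<Otimes>\<^sub>M (pos_law \<Otimes>\<^sub>M edge_law))) D"
    proof (rule iter_bound[OF K_prob prob_count prob_space_pair[OF prob_pos prob_edge]])
      show "A \<in> sets (K_law \<Otimes>\<^sub>M (count_law lam \<Otimes>\<^sub>M (pos_law \<Otimes>\<^sub>M edge_law)))"
        using mA unfolding rcm_law_def .
      show "D \<in> sets (K_law \<Otimes>\<^sub>M (count_law lam \<Otimes>\<^sub>M (pos_law \<Otimes>\<^sub>M edge_law)))"
        using mD unfolding rcm_law_def .
      fix \<kappa> and w :: "('n lab \<Rightarrow> real^'n) \<times> ('n lab set \<Rightarrow> real)"
      assume k: "\<kappa> \<in> space K_law" and w: "w \<in> space (pos_law \<Otimes>\<^sub>M edge_law)"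
      show "ennreal (exp (- lam * real N)) * emeasure (count_law lam) {n. (\<kappa>, n, w) \<in> A}
            \<le> emeasure (count_law lam) {n. (\<kappa>, n, w) \<in> D}"
        using pointwise[where R=R and t=t and p=p and \<phi>=\<phi> and lam=lam, OF lam K_sets B p1 phi_mono k w] unfolding A_def D_def N_def .
    qed
    then show ?thesis unfolding rcm_law_def .
  qed
  have sub: "D \<subseteq> Rs"
  proof
    fix \<omega> assume "\<omega> \<in> D"
    then have sp: "\<omega> \<in> space ?Om" and g: "goodO R B \<omega>" and h: "hz p \<phi> R B \<omega>" by (auto simp: D_def)
    obtain \<kappa> n y v where om: "\<omega> = (\<kappa>, n, y, v)" by (cases \<omega>) auto
    have "\<not> conn_in p \<phi> (n, y, v) B (cubify R) (cubify (Kc B \<kappa>))"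
    proof (rule det_core[OF phi_sup p1 B])
      show "Kc B \<kappa> \<subseteq> halfint \<inter> B" by (auto simp: Kc_def)
      show "plusB R B \<inter> cubify (Kc B \<kappa>) = {}" using g by (simp add: om goodO_def goodK_def)
      show "y a \<in> obox (fst a)" for a
      proof -
        have "goodY y" using g by (simp add: om goodO_def)
        then show ?thesis unfolding goodY_def by blast
      qed
      show "a \<noteq> b \<Longrightarrow> 0 \<le> v {a, b}" for a b
      proof -
        have "goodV v" using g by (simp add: om goodO_def)
        then show "a \<noteq> b \<Longrightarrow> 0 \<le> v {a, b}" unfolding goodV_def by blast
      qed
      fix k z
      assume k: "unit_cube k \<subseteq> cubify R" and z: "z \<in> Delta R B"
        and c: "conn_in p \<phi> (n, y, v) (B - cubify R) (cubify {z}) (cubify (Kc B \<kappa>))"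
        and tch: "unit_cube k \<inter> Lam (1/2) z \<noteq> {}"
      have "z \<in> halfint" using z by (auto simp: Delta_def)
      then obtain m where m: "z = cen m" using halfint_ex by blast
      have "cen m \<in> Uset p \<phi> R B \<omega>" using z c by (simp add: Uset_def om m)
      then show "n k = 0" using h k tch by (simp add: hz_def om m)
    qed
    then show "\<omega> \<in> Rs" using sp by (simp add: Rs_def om)
  qed
  have fA: "emeasure ?Om A = ennreal (measure ?Om A)" by (rule Om.emeasure_eq_measure)
  have fD: "emeasure ?Om D = ennreal (measure ?Om D)" by (rule Om.emeasure_eq_measure)
  have "ennreal (exp (- lam * real N) * measure ?Om A) \<le> ennreal (measure ?Om D)"
    using e2 unfolding fA fD by (simp add: ennreal_mult)
  then have r1: "exp (- lam * real N) * measure ?Om A \<le> measure ?Om D"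
    by (simp add: ennreal_le_iff)
  have r0: "measure ?Om L = measure ?Om A" using e1 by (simp add: measure_def)
  have r2: "measure ?Om D \<le> measure ?Om Rs" using sub mR by (rule Om.finite_measure_mono)
  have "measure ?Om A = exp (lam * real N) * (exp (- lam * real N) * measure ?Om A)"
    by (simp add: mult.assoc[symmetric] exp_add[symmetric])
  also have "\<dots> \<le> exp (lam * real N) * measure ?Om D" using r1 by (intro mult_left_mono) auto
  also have "\<dots> \<le> exp (lam * real N) * measure ?Om Rs" using r2 by (intro mult_left_mono) auto
  finally have "measure ?Om L \<le> exp (lam * real N) * measure ?Om Rs" using r0 by simp
  moreover have "lam * real N = 3 ^ CARD('n) * lam * real t" by (simp add: N_def)
  ultimately show ?thesis unfolding Leq Req by simp
qed


end
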